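(* Let $G$ be a triangular graph and run the procedure described in the context on $G$, starting with two vertices of the outer triangle as the distinguished vertices $v_1,v_2$ (clockwise consecutive, with the edge $v_1v_2$ given some orientation). Then the orientation of $G$ constructed by the procedure contains no clockwise oriented triangle, i.e., no directed cycle of length $3$ that is traversed clockwise in the plane embedding.
   Context: A triangular graph is a plane graph with at least 3 vertices all of whose faces, including the outer one, are triangles. A near triangulation is a 2-connected plane graph whose outer face is bounded by a cycle (the outer cycle) and all of whose inner faces are triangles. The procedure: its input is a near triangulation $H$ with two distinguished vertices $v_1,v_2$ such that $v_2$ immediately follows $v_1$ clockwise on the outer cycle; the edge $v_1v_2$ is already oriented, other edges are not. It orients every edge and gives each edge a strength 1 or 2, as follows. (Recursive step) If the outer cycle has a chord $v_av_b$, it splits the outer cycle into cycles $C_1$ (containing $v_1,v_2$) and $C_2$; let $H_1,H_2$ be the subgraphs formed by $C_1$, $C_2$ with their interiors. Run the procedure first on $H_1$ with distinguished vertices $v_1,v_2$, and then on $H_2$ with the endpoints of the chord as distinguished vertices, ordered so that the second immediately follows the first clockwise on the outer cycle of $H_2$ (the chord has been oriented during the run on $H_1$). (Orienting step) If the outer cycle has no chord, let $v_3$ be the vertex immediately following $v_2$ clockwise on the outer cycle. Every edge of the current graph incident to $v_3$ that lies on the outer cycle is oriented towards $v_3$ and given strength 1; every other edge of the current graph incident to $v_3$ is oriented away from $v_3$ and given strength 2. Then $v_3$ is deleted, and if vertices other than $v_1,v_2$ remain, the procedure is called recursively on the remaining graph with the same distinguished vertices $v_1,v_2$. *)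

theory Defs
  imports "HOL-Complex_Analysis.Complex_Analysis"
begin

text \<open>Plane graphs are encoded geometrically: vertices are points of the complex plane,
  an (undirected, simple) edge is a two-element set of vertices, and the drawing of the edge
  between u and v is the arc gam u v (gam v u is its reverse).\<close>

type_synonym drawing = "complex \<Rightarrow> complex \<Rightarrow> real \<Rightarrow> complex"

definition plane_graph :: "drawing \<Rightarrow> complex set \<Rightarrow> complex set set \<Rightarrow> bool" where
  "plane_graph gam V E \<longleftrightarrow>
     finite V \<and>
     (\<forall>e\<in>E. \<exists>u v. e = {u, v} \<and> u \<noteq> v \<and> u \<in> V \<and> v \<in> V) \<and>
     (\<forall>u v. {u, v} \<in> E \<longrightarrow> u \<noteq> v \<longrightarrow>
        arc (gam u v) \<and> pathstart (gam u v) = u \<and> pathfinish (gam u v) = v \<and>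
        gam v u = reversepath (gam u v) \<and> path_image (gam u v) \<inter> V = {u, v}) \<and>
     (\<forall>u v x y. {u, v} \<in> E \<longrightarrow> {x, y} \<in> E \<longrightarrow> {u, v} \<noteq> {x, y} \<longrightarrow>
        path_image (gam u v) \<inter> path_image (gam x y) \<subseteq> {u, v} \<inter> {x, y})"

definition drawn :: "drawing \<Rightarrow> complex set \<Rightarrow> complex set set \<Rightarrow> complex set" where
  "drawn gam W F = W \<union> \<Union>{path_image (gam u v) | u v. {u, v} \<in> F \<and> u \<noteq> v}"

definition faces :: "drawing \<Rightarrow> complex set \<Rightarrow> complex set set \<Rightarrow> complex set set" where
  "faces gam W F = components (- drawn gam W F)"

fun walk_path :: "drawing \<Rightarrow> complex list \<Rightarrow> real \<Rightarrow> complex" where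
  "walk_path gam (u # v # w # rest) = gam u v +++ walk_path gam (v # w # rest)"
| "walk_path gam [u, v] = gam u v"
| "walk_path gam _ = linepath 0 0"

definition cycle_path :: "drawing \<Rightarrow> complex list \<Rightarrow> real \<Rightarrow> complex" where
  "cycle_path gam cs = walk_path gam (cs @ [hd cs])"

definition is_cycle :: "complex set set \<Rightarrow> complex list \<Rightarrow> bool" where
  "is_cycle F cs \<longleftrightarrow> distinct cs \<and> length cs \<ge> 3 \<and>
     (\<forall>i < length cs. {cs ! i, cs ! ((i + 1) mod length cs)} \<in> F)"

definition succ_on :: "complex list \<Rightarrow> complex \<Rightarrow> complex \<Rightarrow> bool" where
  "succ_on cs a b \<longleftrightarrow> (\<exists>i < length cs. cs ! i = a \<and> cs ! ((i + 1) mod length cs) = b)"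

definition clockwise :: "drawing \<Rightarrow> complex list \<Rightarrow> bool" where
  "clockwise gam cs \<longleftrightarrow>
     (\<forall>z \<in> inside (path_image (cycle_path gam cs)). winding_number (cycle_path gam cs) z = -1)"

definition is_triangle :: "complex set set \<Rightarrow> complex \<Rightarrow> complex \<Rightarrow> complex \<Rightarrow> bool" where
  "is_triangle F a b c \<longleftrightarrow> distinct [a, b, c] \<and> {a, b} \<in> F \<and> {b, c} \<in> F \<and> {c, a} \<in> F"

definition triangle_face :: "drawing \<Rightarrow> complex set set \<Rightarrow> complex set \<Rightarrow> bool" where
  "triangle_face gam F f \<longleftrightarrow>
     (\<exists>a b c. is_triangle F a b c \<and> frontier f = path_image (cycle_path gam [a, b, c]))"

definition triangular_graph :: "drawing \<Rightarrow> complex set \<Rightarrow> complex set set \<Rightarrow> bool" where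
  "triangular_graph gam V E \<longleftrightarrow> plane_graph gam V E \<and> card V \<ge> 3 \<and>
     (\<forall>f \<in> faces gam V E. triangle_face gam E f)"

definition outer_cycle :: "drawing \<Rightarrow> complex set \<Rightarrow> complex set set \<Rightarrow> complex list \<Rightarrow> bool" where
  "outer_cycle gam W F cs \<longleftrightarrow> is_cycle F cs \<and> set cs \<subseteq> W \<and> clockwise gam cs \<and>
     (\<forall>f \<in> faces gam W F. \<not> bounded f \<longrightarrow> frontier f = path_image (cycle_path gam cs))"

definition gconnected :: "complex set \<Rightarrow> complex set set \<Rightarrow> bool" where
  "gconnected W F \<longleftrightarrow> W \<noteq> {} \<and>
     (\<forall>x \<in> W. \<forall>y \<in> W. (\<lambda>u v. {u, v} \<in> F \<and> u \<in> W \<and> v \<in> W)\<^sup>*\<^sup>* x y)"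

definition two_connected :: "complex set \<Rightarrow> complex set set \<Rightarrow> bool" where
  "two_connected W F \<longleftrightarrow> card W \<ge> 3 \<and> gconnected W F \<and>
     (\<forall>x \<in> W. gconnected (W - {x}) {e \<in> F. x \<notin> e})"

definition near_triangulation :: "drawing \<Rightarrow> complex set \<Rightarrow> complex set set \<Rightarrow> bool" where
  "near_triangulation gam W F \<longleftrightarrow> plane_graph gam W F \<and> two_connected W F \<and>
     (\<exists>cs. outer_cycle gam W F cs) \<and>
     (\<forall>f \<in> faces gam W F. bounded f \<longrightarrow> triangle_face gam F f)"

definition closed_disk :: "drawing \<Rightarrow> complex list \<Rightarrow> complex set" where
  "closed_disk gam C = path_image (cycle_path gam C) \<union> inside (path_image (cycle_path gam C))"

definition disk_V :: "drawing \<Rightarrow> complex set \<Rightarrow> complex list \<Rightarrow> complex set" where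
  "disk_V gam W C = W \<inter> closed_disk gam C"

definition disk_E :: "drawing \<Rightarrow> complex set set \<Rightarrow> complex list \<Rightarrow> complex set set" where
  "disk_E gam F C = {e \<in> F. \<exists>u v. e = {u, v} \<and> u \<noteq> v \<and> path_image (gam u v) \<subseteq> closed_disk gam C}"

definition has_chord :: "complex set set \<Rightarrow> complex list \<Rightarrow> bool" where
  "has_chord F cs \<longleftrightarrow>
     (\<exists>k a p b q. rotate k cs = a # p @ b # q \<and> p \<noteq> [] \<and> q \<noteq> [] \<and> {a, b} \<in> F)"

text \<open>Orientations with strengths: (u, v, s) means the edge {u,v} is oriented from u to v
  and has strength s.\<close>

definition orient_at :: "complex set set \<Rightarrow> complex list \<Rightarrow> complex \<Rightarrow> (complex \<times> complex \<times> nat) set" where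
  "orient_at F cs v3 =
     {(u, v3, 1) | u. {u, v3} \<in> F \<and> (succ_on cs u v3 \<or> succ_on cs v3 u)} \<union>
     {(v3, u, 2) | u. {u, v3} \<in> F \<and> \<not> (succ_on cs u v3 \<or> succ_on cs v3 u)}"

text \<open>run gam W F v1 v2 D: some run of the procedure on the near triangulation (W, F)
  with distinguished vertices v1, v2 orients (with strengths) the edges other than v1v2
  as recorded in D.  Nondeterminism: the choice of the chord.\<close>

inductive run :: "drawing \<Rightarrow> complex set \<Rightarrow> complex set set \<Rightarrow> complex \<Rightarrow> complex \<Rightarrow>
    (complex \<times> complex \<times> nat) set \<Rightarrow> bool" for gam where
  chord: "\<lbrakk> near_triangulation gam W F; outer_cycle gam W F cs; succ_on cs v1 v2;
      rotate k cs = a # p @ b # q; p \<noteq> []; q \<noteq> []; {a, b} \<in> F;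
      (C1, C2) \<in> {(a # p @ [b], b # q @ [a]), (b # q @ [a], a # p @ [b])};
      v1 \<in> set C1; v2 \<in> set C1;
      run gam (disk_V gam W C1) (disk_E gam F C1) v1 v2 D1;
      {x, y} = {a, b};
      run gam (disk_V gam W C2) (disk_E gam F C2) x y D2 \<rbrakk>
    \<Longrightarrow> run gam W F v1 v2 (D1 \<union> D2)"
| orient_last: "\<lbrakk> near_triangulation gam W F; outer_cycle gam W F cs; succ_on cs v1 v2;
      \<not> has_chord F cs; succ_on cs v2 v3; W - {v3} = {v1, v2} \<rbrakk>
    \<Longrightarrow> run gam W F v1 v2 (orient_at F cs v3)"
| orient_rec: "\<lbrakk> near_triangulation gam W F; outer_cycle gam W F cs; succ_on cs v1 v2;
      \<not> has_chord F cs; succ_on cs v2 v3; W - {v3} \<noteq> {v1, v2};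
      run gam (W - {v3}) {e \<in> F. v3 \<notin> e} v1 v2 D' \<rbrakk>
    \<Longrightarrow> run gam W F v1 v2 (orient_at F cs v3 \<union> D')"

end

theory Submission
  imports Defs
begin

definition pairs :: "'a list \<Rightarrow> ('a \<times> 'a) list" where "pairs xs = zip xs (tl xs)"

lemma pairs_simps[simp]: "pairs [] = []" "pairs [x] = []" "pairs (x#y#ys) = (x,y) # pairs (y#ys)"
  by (simp_all add: pairs_def)

lemma pairs_snoc: "xs \<noteq> [] \<Longrightarrow> pairs (xs @ [y]) = pairs xs @ [(last xs, y)]"
proof (induction xs)
  case Nil then show ?case by simp
next
  case (Cons x xs) then show ?case by (cases xs) auto
qed

lemma pairs_append: "pairs (xs @ y # ys) = pairs (xs @ [y]) @ pairs (y # ys)"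
proof (induction xs)
  case Nil then show ?case by simp
next
  case (Cons x xs) then show ?case by (cases xs) auto
qed

lemma set_pairs_nth: "set (pairs xs) = {(xs!i, xs!(i+1)) | i. i+1 < length xs}"
  by (auto simp: pairs_def set_zip nth_tl)

lemma set_pairs_sub: "(u,v) \<in> set (pairs xs) \<Longrightarrow> u \<in> set xs \<and> v \<in> set xs"
  by (auto simp: set_pairs_nth)

definition cpairs :: "'a list \<Rightarrow> ('a \<times> 'a) list" where "cpairs cs = pairs (cs @ [hd cs])"

lemma set_cpairs_nth: assumes "cs \<noteq> []"
  shows "set (cpairs cs) = {(cs!i, cs!((i+1) mod length cs)) | i. i < length cs}"
proof -
  have "(cs @ [hd cs]) ! (i+1) = cs ! ((i+1) mod length cs)" if "i < length cs" for i
  proof (cases "i+1 < length cs")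
    case True then show ?thesis by (simp add: nth_append)
  next
    case False then have "i + 1 = length cs" using that by simp
    then show ?thesis using assms by (simp add: nth_append hd_conv_nth)
  qed
  moreover have "(cs @ [hd cs]) ! i = cs ! i" if "i < length cs" for i
    using that by (simp add: nth_append)
  ultimately show ?thesis unfolding cpairs_def set_pairs_nth
  proof (intro set_eqI iffI)
    fix x assume A: "\<And>i. i < length cs \<Longrightarrow> (cs @ [hd cs]) ! (i + 1) = cs ! ((i + 1) mod length cs)"
      "\<And>i. i < length cs \<Longrightarrow> (cs @ [hd cs]) ! i = cs ! i"
    { assume "x \<in> {((cs @ [hd cs]) ! i, (cs @ [hd cs]) ! (i + 1)) |i. i + 1 < length (cs @ [hd cs])}"
      then obtain i where "x = ((cs @ [hd cs]) ! i, (cs @ [hd cs]) ! (i + 1))" "i < length cs" by auto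
      then show "x \<in> {(cs ! i, cs ! ((i + 1) mod length cs)) |i. i < length cs}" using A by auto }
    { assume "x \<in> {(cs ! i, cs ! ((i + 1) mod length cs)) |i. i < length cs}"
      then obtain i where "x = (cs ! i, cs ! ((i + 1) mod length cs))" "i < length cs" by auto
      then show "x \<in> {((cs @ [hd cs]) ! i, (cs @ [hd cs]) ! (i + 1)) |i. i + 1 < length (cs @ [hd cs])}"
        using A[of i] by force }
  qed
qed

lemma succ_on_cpairs: "cs \<noteq> [] \<Longrightarrow> succ_on cs a b \<longleftrightarrow> (a,b) \<in> set (cpairs cs)"
  by (auto simp: set_cpairs_nth succ_on_def)

lemma cpairs_rotate1: assumes "cs \<noteq> []" shows "\<exists>as bs. cpairs cs = as @ bs \<and> cpairs (rotate1 cs) = bs @ as"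
proof (cases cs)
  case Nil then show ?thesis using \<open>cs \<noteq> []\<close> by simp
next
  case (Cons x xs)
  show ?thesis
  proof (cases xs)
    case Nil then show ?thesis using \<open>cs = x # xs\<close> by (auto simp: cpairs_def)
  next
    case (Cons y ys)
    note Cons2 = this
    note Cons = \<open>cs = x # xs\<close>
    have "cpairs cs = [(x,y)] @ pairs (y # ys @ [x])" using Cons Cons2 by (simp add: cpairs_def)
    moreover have "cpairs (rotate1 cs) = pairs (y # ys @ [x]) @ [(x,y)]"
      using Cons Cons2 pairs_snoc[of "y # ys @ [x]" y] by (simp add: cpairs_def)
    ultimately show ?thesis by blast
  qed
qed

lemma cpairs_rotate:
  fixes f :: "'a \<times> 'a \<Rightarrow> 'b::comm_monoid_add"
  shows "cs \<noteq> [] \<Longrightarrow> set (cpairs (rotate k cs)) = set (cpairs cs) \<and>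
     sum_list (map f (cpairs (rotate k cs))) = sum_list (map f (cpairs cs))"
proof (induction k)
  case 0 then show ?case by simp
next
  case (Suc k)
  have ne: "rotate k cs \<noteq> []" using Suc.prems by simp
  obtain as bs where "cpairs (rotate k cs) = as @ bs" "cpairs (rotate1 (rotate k cs)) = bs @ as"
    using cpairs_rotate1[OF ne] by blast
  then show ?case using Suc by (auto simp: add.commute)
qed

lemma pg_edge:
  assumes "plane_graph gam W F" "{u,v} \<in> F" "u \<noteq> v"
  shows "arc (gam u v) \<and> pathstart (gam u v) = u \<and> pathfinish (gam u v) = v \<and>
     gam v u = reversepath (gam u v) \<and> path_image (gam u v) \<inter> W = {u, v}"
proof -
  have "\<forall>u v. {u, v} \<in> F \<longrightarrow> u \<noteq> v \<longrightarrow>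
        arc (gam u v) \<and> pathstart (gam u v) = u \<and> pathfinish (gam u v) = v \<and>
        gam v u = reversepath (gam u v) \<and> path_image (gam u v) \<inter> W = {u, v}"
    using assms(1) unfolding plane_graph_def by (elim conjE)
  then show ?thesis using assms(2,3) by simp
qed

lemma pg_cross:
  assumes "plane_graph gam W F" "{u,v} \<in> F" "{x,y} \<in> F" "{u,v} \<noteq> {x,y}"
  shows "path_image (gam u v) \<inter> path_image (gam x y) \<subseteq> {u,v} \<inter> {x,y}"
proof -
  have "\<forall>u v x y. {u, v} \<in> F \<longrightarrow> {x, y} \<in> F \<longrightarrow> {u, v} \<noteq> {x, y} \<longrightarrow>
        path_image (gam u v) \<inter> path_image (gam x y) \<subseteq> {u, v} \<inter> {x, y}"
    using assms(1) unfolding plane_graph_def by (elim conjE)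
  then show ?thesis using assms(2-4) by simp
qed

lemma pg_edge_in: assumes "plane_graph gam W F" "e \<in> F" shows "\<exists>u v. e = {u,v} \<and> u \<noteq> v \<and> u \<in> W \<and> v \<in> W"
proof -
  have "\<forall>e\<in>F. \<exists>u v. e = {u, v} \<and> u \<noteq> v \<and> u \<in> W \<and> v \<in> W"
    using assms(1) unfolding plane_graph_def by (elim conjE)
  then show ?thesis using assms(2) by simp
qed

lemma pg_finite: "plane_graph gam W F \<Longrightarrow> finite W"
  unfolding plane_graph_def by (elim conjE)

lemma pg_edge_in2: assumes "plane_graph gam W F" "{u,v} \<in> F" shows "u \<noteq> v \<and> u \<in> W \<and> v \<in> W"
  using pg_edge_in[OF assms] by (metis doubleton_eq_iff)

lemma pg_rev_image: assumes "plane_graph gam W F" "{u,v} \<in> F"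
  shows "path_image (gam v u) = path_image (gam u v)"
proof -
  have "u \<noteq> v" using pg_edge_in2[OF assms] by simp
  then show ?thesis using pg_edge[OF assms] by simp
qed

lemma walk_induct: "P [] \<Longrightarrow> (\<And>x. P [x]) \<Longrightarrow> (\<And>u v. P [u,v]) \<Longrightarrow>
  (\<And>u v w rest. P (v#w#rest) \<Longrightarrow> P (u#v#w#rest)) \<Longrightarrow> P xs"
proof (induction xs rule: induct_list012)
  case (3 x y zs) then show ?case by (cases zs) auto
qed auto

lemma walk_props:
  assumes pg: "plane_graph gam W F"
  shows "2 \<le> length L \<Longrightarrow> \<forall>(u,v)\<in>set (pairs L). {u,v} \<in> F \<Longrightarrow>
    path (walk_path gam L) \<and> pathstart (walk_path gam L) = hd L \<and>
    pathfinish (walk_path gam L) = last L \<and>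
    path_image (walk_path gam L) = (\<Union>(u,v)\<in>set (pairs L). path_image (gam u v)) \<and>
    (\<forall>z. z \<notin> path_image (walk_path gam L) \<longrightarrow>
       winding_number (walk_path gam L) z = (\<Sum>(u,v)\<leftarrow>pairs L. winding_number (gam u v) z))"
proof (induction L rule: walk_induct)
  case (4 u v w rest)
  have e: "{u,v} \<in> F" using "4.prems" by simp
  have uv: "u \<noteq> v" using pg_edge_in2[OF pg e] by simp
  note E = pg_edge[OF pg e uv]
  have IH: "path (walk_path gam (v # w # rest)) \<and> pathstart (walk_path gam (v # w # rest)) = v \<and>
    pathfinish (walk_path gam (v # w # rest)) = last (v # w # rest) \<and>
    path_image (walk_path gam (v # w # rest)) = (\<Union>(u,v)\<in>set (pairs (v # w # rest)). path_image (gam u v)) \<and>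
    (\<forall>z. z \<notin> path_image (walk_path gam (v # w # rest)) \<longrightarrow>
       winding_number (walk_path gam (v # w # rest)) z = (\<Sum>(u,v)\<leftarrow>pairs (v # w # rest). winding_number (gam u v) z))"
    using "4.IH" "4.prems" by simp
  have p1: "path (gam u v)" using E arc_imp_path by blast
  show ?case
  proof (intro conjI allI impI)
    show "path (walk_path gam (u # v # w # rest))" using IH p1 E by simp
    show "pathstart (walk_path gam (u # v # w # rest)) = hd (u # v # w # rest)" using E by simp
    show "pathfinish (walk_path gam (u # v # w # rest)) = last (u # v # w # rest)" using IH by simp
    show "path_image (walk_path gam (u # v # w # rest)) = (\<Union>(u,v)\<in>set (pairs (u # v # w # rest)). path_image (gam u v))"
      using IH E p1 by (simp add: path_image_join)
    fix z assume "z \<notin> path_image (walk_path gam (u # v # w # rest))"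
    then have "z \<notin> path_image (gam u v)" "z \<notin> path_image (walk_path gam (v # w # rest))"
      using IH E by (auto simp: path_image_join)
    then show "winding_number (walk_path gam (u # v # w # rest)) z =
      (\<Sum>(u,v)\<leftarrow>pairs (u # v # w # rest). winding_number (gam u v) z)"
      using IH E p1 by (simp add: winding_number_join)
  qed
next
  case (3 u v)
  have e: "{u,v} \<in> F" using "3.prems" by simp
  have uv: "u \<noteq> v" using pg_edge_in2[OF pg e] by simp
  note E = pg_edge[OF pg e uv]
  then show ?case using arc_imp_path by auto
qed auto

lemma walk_arc:
  assumes pg: "plane_graph gam W F"
  shows "2 \<le> length L \<Longrightarrow> \<forall>(u,v)\<in>set (pairs L). {u,v} \<in> F \<Longrightarrow> distinct L \<Longrightarrow>
    arc (walk_path gam L)"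
proof (induction L rule: walk_induct)
  case (4 u v w rest)
  have e: "{u,v} \<in> F" using "4.prems" by simp
  have uv: "u \<noteq> v" using pg_edge_in2[OF pg e] by simp
  note E = pg_edge[OF pg e uv]
  have W: "pathstart (walk_path gam (v # w # rest)) = v \<and>
    path_image (walk_path gam (v # w # rest)) = (\<Union>(u,v)\<in>set (pairs (v # w # rest)). path_image (gam u v))"
    using walk_props[OF pg, of "v # w # rest"] "4.prems" by simp
  have "path_image (gam u v) \<inter> path_image (walk_path gam (v # w # rest)) \<subseteq> {v}"
  proof
    fix z assume z: "z \<in> path_image (gam u v) \<inter> path_image (walk_path gam (v # w # rest))"
    then obtain x y where xy: "(x,y) \<in> set (pairs (v # w # rest))" "z \<in> path_image (gam x y)"
      using W by auto
    have xyF: "{x,y} \<in> F" using xy "4.prems" by auto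
    have "x \<in> set (v#w#rest)" "y \<in> set (v#w#rest)" using set_pairs_sub[OF xy(1)] by auto
    then have "u \<noteq> x" "u \<noteq> y" using "4.prems" by auto
    have "{u,v} \<noteq> {x,y}"
    proof
      assume "{u,v} = {x,y}" then have "u \<in> {x,y}" by blast
      then show False using \<open>u \<noteq> x\<close> \<open>u \<noteq> y\<close> by blast
    qed
    then have "z \<in> {u,v} \<inter> {x,y}" using pg_cross[OF pg e xyF] z xy by blast
    then show "z \<in> {v}" using \<open>u \<noteq> x\<close> \<open>u \<noteq> y\<close> by auto
  qed
  moreover have "arc (walk_path gam (v # w # rest))"
    by (rule "4.IH") (use "4.prems" in auto)
  moreover have "pathstart (walk_path gam (v # w # rest)) = v" using W by simp
  ultimately show ?case using E by (simp add: arc_join)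
next
  case (3 u v)
  have e: "{u,v} \<in> F" using "3.prems" by simp
  have uv: "u \<noteq> v" using pg_edge_in2[OF pg e] by simp
  then show ?case using pg_edge[OF pg e uv] by auto
qed auto


lemma cyc_basic:
  assumes pg: "plane_graph gam W F" and cyc: "is_cycle F cs"
  shows "cs \<noteq> [] \<and> 3 \<le> length cs \<and> (\<forall>(u,v)\<in>set (cpairs cs). {u,v} \<in> F \<and> u \<noteq> v)"
proof -
  have ne: "cs \<noteq> []" "3 \<le> length cs" using cyc unfolding is_cycle_def by auto
  have "{u,v} \<in> F \<and> u \<noteq> v" if uv: "(u,v) \<in> set (cpairs cs)" for u v
  proof -
    obtain i where i: "i < length cs" "u = cs ! i" "v = cs ! ((i+1) mod length cs)"
      using uv set_cpairs_nth[OF ne(1)] by auto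
    have uvF: "{u,v} \<in> F" using cyc i unfolding is_cycle_def by auto
    have "i \<noteq> (i+1) mod length cs"
    proof (cases "i + 1 < length cs")
      case True then show ?thesis by simp
    next
      case False then have "i + 1 = length cs" using i(1) by simp
      then show ?thesis using ne(2) by simp
    qed
    moreover have "(i+1) mod length cs < length cs"
      using mod_less_divisor[of "length cs" "i+1"] ne(2) by linarith
    moreover have "distinct cs" using cyc unfolding is_cycle_def by simp
    ultimately have "u \<noteq> v" using i nth_eq_iff_index_eq by metis
    then show ?thesis using uvF by simp
  qed
  then show ?thesis using ne by auto
qed

lemma cyc_props:
  assumes pg: "plane_graph gam W F" and cyc: "is_cycle F cs"
  shows "path (cycle_path gam cs) \<and> pathstart (cycle_path gam cs) = hd cs \<and>
    pathfinish (cycle_path gam cs) = hd cs \<and>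
    path_image (cycle_path gam cs) = (\<Union>(u,v)\<in>set (cpairs cs). path_image (gam u v)) \<and>
    (\<forall>z. z \<notin> path_image (cycle_path gam cs) \<longrightarrow>
       winding_number (cycle_path gam cs) z = (\<Sum>(u,v)\<leftarrow>cpairs cs. winding_number (gam u v) z))"
proof -
  note B = cyc_basic[OF pg cyc]
  have "2 \<le> length (cs @ [hd cs])" using B by simp
  moreover have "\<forall>(u,v)\<in>set (pairs (cs @ [hd cs])). {u,v} \<in> F" using B unfolding cpairs_def by auto
  ultimately have "path (walk_path gam (cs @ [hd cs])) \<and> pathstart (walk_path gam (cs @ [hd cs])) = hd (cs @ [hd cs]) \<and>
    pathfinish (walk_path gam (cs @ [hd cs])) = last (cs @ [hd cs]) \<and>
    path_image (walk_path gam (cs @ [hd cs])) = (\<Union>(u,v)\<in>set (pairs (cs @ [hd cs])). path_image (gam u v)) \<and>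
    (\<forall>z. z \<notin> path_image (walk_path gam (cs @ [hd cs])) \<longrightarrow>
       winding_number (walk_path gam (cs @ [hd cs])) z = (\<Sum>(u,v)\<leftarrow>pairs (cs @ [hd cs]). winding_number (gam u v) z))"
    by (rule walk_props[OF pg])
  then show ?thesis using B unfolding cycle_path_def cpairs_def by simp
qed

lemma edge_in_drawn: "{u,v} \<in> F \<Longrightarrow> u \<noteq> v \<Longrightarrow> path_image (gam u v) \<subseteq> drawn gam W F"
  unfolding drawn_def by blast

lemma drawn_compact: assumes pg: "plane_graph gam W F" shows "compact (drawn gam W F)"
proof -
  have fW: "finite W" using pg by (rule pg_finite)
  have "{path_image (gam u v) | u v. {u, v} \<in> F \<and> u \<noteq> v} \<subseteq> (\<lambda>(u,v). path_image (gam u v)) ` (W \<times> W)"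
  proof
    fix S assume "S \<in> {path_image (gam u v) | u v. {u, v} \<in> F \<and> u \<noteq> v}"
    then obtain u v where "S = path_image (gam u v)" "{u,v} \<in> F" by blast
    moreover then have "u \<in> W" "v \<in> W" using pg_edge_in2[OF pg] by blast+
    ultimately show "S \<in> (\<lambda>(u,v). path_image (gam u v)) ` (W \<times> W)" by blast
  qed
  then have fin: "finite {path_image (gam u v) | u v. {u, v} \<in> F \<and> u \<noteq> v}"
    using fW by (meson finite_SigmaI finite_imageI finite_subset)
  have "compact S" if S: "S \<in> {path_image (gam u v) | u v. {u, v} \<in> F \<and> u \<noteq> v}" for S
  proof -
    obtain u v where "S = path_image (gam u v)" "{u,v} \<in> F" "u \<noteq> v" using S by blast
    then show ?thesis using pg_edge[OF pg] arc_imp_path compact_path_image by metis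
  qed
  then have "compact (\<Union>{path_image (gam u v) | u v. {u, v} \<in> F \<and> u \<noteq> v})"
    using fin by (intro compact_Union) auto
  moreover have "compact W" using fW by (rule finite_imp_compact)
  ultimately show ?thesis unfolding drawn_def by (rule compact_Un[rotated])
qed

lemma conn_outside:
  assumes "connected S" "\<not> bounded S" "S \<inter> K = {}" shows "S \<subseteq> outside K"
proof
  fix x assume x: "x \<in> S"
  have "S \<subseteq> connected_component_set (- K) x"
    using assms x by (intro connected_component_maximal) auto
  then have "\<not> bounded (connected_component_set (- K) x)" using assms(2) bounded_subset by blast
  then show "x \<in> outside K" unfolding outside_def using x assms(3) by auto
qed

lemma OUT:
  assumes pg: "plane_graph gam W F" and oc: "outer_cycle gam W F cs"
  shows "outside (path_image (cycle_path gam cs)) \<inter> drawn gam W F = {} \<and>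
         frontier (outside (path_image (cycle_path gam cs))) = path_image (cycle_path gam cs) \<and>
         path_image (cycle_path gam cs) \<subseteq> drawn gam W F"
proof -
  define G where "G = path_image (cycle_path gam cs)"
  define D where "D = drawn gam W F"
  have cyc: "is_cycle F cs" using oc unfolding outer_cycle_def by simp
  note CP = cyc_props[OF pg cyc]
  note CB = cyc_basic[OF pg cyc]
  have GU: "G = (\<Union>(u,v)\<in>set (cpairs cs). path_image (gam u v))"
    unfolding G_def using CP by (elim conjE)
  have CB3: "\<forall>(u,v)\<in>set (cpairs cs). {u,v} \<in> F \<and> u \<noteq> v" using CB by (elim conjE)
  have GD: "G \<subseteq> D"
  proof
    fix z assume "z \<in> G"
    then obtain u v where uv: "(u,v) \<in> set (cpairs cs)" "z \<in> path_image (gam u v)" unfolding GU by blast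
    then have "{u,v} \<in> F" "u \<noteq> v" using CB3 by auto
    then show "z \<in> D" using uv edge_in_drawn[of u v F gam W] unfolding D_def by blast
  qed
  have cD: "compact D" unfolding D_def using pg by (rule drawn_compact)
  then have "bounded D" by (rule compact_imp_bounded)
  then obtain R where R0: "R > 0" "\<forall>x\<in>D. norm x \<le> R" unfolding bounded_pos by blast
  have R: "R > 0" "D \<subseteq> cball (0::complex) R" using R0 by auto
  define x0 where "x0 = complex_of_real (R + 1)"
  have "norm x0 = R + 1" using R unfolding x0_def by simp
  then have x0: "x0 \<notin> cball 0 R" by (simp add: mem_cball_0)
  have x0D: "x0 \<in> - D" using x0 R by blast
  define f where "f = connected_component_set (- D) x0"
  have fcomp: "f \<in> components (- D)" unfolding f_def using x0D by (rule componentsI)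
  have cc: "connected (- cball (0::complex) R)"
    by (rule connected_complement_bounded_convex) auto
  have sub: "- cball 0 R \<subseteq> f" unfolding f_def
  proof (rule connected_component_maximal)
    show "x0 \<in> - cball (0::complex) R" using x0 by blast
    show "connected (- cball (0::complex) R)" by (rule cc)
    show "- cball (0::complex) R \<subseteq> - D" using R by blast
  qed
  have unb: "\<not> bounded f"
  proof
    assume "bounded f"
    then have "bounded (- cball (0::complex) R)" using sub bounded_subset by blast
    then have "bounded (cball 0 R \<union> - cball (0::complex) R)" by (simp only: bounded_Un bounded_cball simp_thms)
    moreover have "cball 0 R \<union> - cball (0::complex) R = UNIV" by blast
    ultimately show False using not_bounded_UNIV by metis
  qed
  have "f \<in> faces gam W F" using fcomp unfolding faces_def D_def by simp
  moreover have "\<forall>f\<in>faces gam W F. \<not> bounded f \<longrightarrow> frontier f = G"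
    using oc unfolding outer_cycle_def G_def by (elim conjE)
  ultimately have fr: "frontier f = G" using unb by blast
  have fD: "f \<subseteq> - D" unfolding f_def by (rule connected_component_subset)
  have fconn: "connected f" unfolding f_def by simp
  have f_out: "f \<subseteq> outside G" using conn_outside[OF fconn unb] fD GD by blast
  have bG: "bounded G" using GD \<open>bounded D\<close> bounded_subset by blast
  have out_f: "outside G \<subseteq> f"
  proof (rule ccontr)
    assume "\<not> outside G \<subseteq> f"
    then have "outside G - f \<noteq> {}" by blast
    moreover have "outside G \<inter> f \<noteq> {}" using f_out sub x0 by blast
    moreover have "connected (outside G)" using bG by (intro connected_outside) auto
    ultimately have "outside G \<inter> frontier f \<noteq> {}" using connected_Int_frontier by blast
    then show False using fr outside_no_overlap by blast
  qed
  have "outside G = f" using f_out out_f by blast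
  then show ?thesis using fD fr GD unfolding G_def D_def by blast
qed

lemma INS:
  assumes pg: "plane_graph gam W F" and oc: "outer_cycle gam W F cs"
    and K: "path K" "pathfinish K = pathstart K" "path_image K \<subseteq> drawn gam W F"
  shows "inside (path_image K) \<subseteq> inside (path_image (cycle_path gam cs))"
    and "outside (path_image (cycle_path gam cs)) \<subseteq> outside (path_image K)"
proof -
  define G where "G = path_image (cycle_path gam cs)"
  note O = OUT[OF pg oc]
  have cyc: "is_cycle F cs" using oc unfolding outer_cycle_def by simp
  have "path (cycle_path gam cs)" using cyc_props[OF pg cyc] by (elim conjE)
  then have bG: "bounded G" unfolding G_def by (rule bounded_path_image)
  have OK: "outside G \<subseteq> outside (path_image K)"
  proof (rule conn_outside)
    show "connected (outside G)" using bG by (intro connected_outside) auto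
    show "\<not> bounded (outside G)" using bG by (rule unbounded_outside)
    show "outside G \<inter> path_image K = {}" using O K(3) unfolding G_def by blast
  qed
  then show "outside G \<subseteq> outside (path_image K)" unfolding G_def .
  show "inside (path_image K) \<subseteq> inside G"
  proof
    fix z assume z: "z \<in> inside (path_image K)"
    have "z \<notin> outside G" using z OK inside_Int_outside by blast
    moreover have "z \<notin> G"
    proof
      assume "z \<in> G"
      then have "z \<in> closure (outside G)" using O unfolding G_def frontier_def by blast
      moreover have "open (inside (path_image K))" using K by (simp add: open_inside closed_path_image)
      ultimately have "inside (path_image K) \<inter> outside G \<noteq> {}" using z open_Int_closure_eq_empty by blast
      then show False using OK inside_Int_outside by blast
    qed
    ultimately show "z \<in> inside G" using inside_Un_outside by blast
  qed
qed


lemma oc_parts: assumes "outer_cycle gam W F cs"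
  shows "is_cycle F cs" "set cs \<subseteq> W" "clockwise gam cs"
proof -
  have "is_cycle F cs \<and> set cs \<subseteq> W \<and> clockwise gam cs" using assms unfolding outer_cycle_def by (elim conjE) simp
  then show "is_cycle F cs" "set cs \<subseteq> W" "clockwise gam cs" by simp_all
qed

lemma closure_ball_meet: assumes "p \<in> closure S" "e > 0" obtains z where "z \<in> ball p e" "z \<in> S"
proof -
  have "ball p e \<inter> S \<noteq> {}"
  proof
    assume "ball p e \<inter> S = {}"
    then have "ball p e \<inter> closure S = {}" using open_Int_closure_eq_empty[of "ball p e" S] by simp
    moreover have "p \<in> ball p e" using assms(2) by simp
    ultimately show False using assms(1) by blast
  qed
  then show ?thesis using that by blast
qed

lemma rot_facts:
  assumes d: "distinct cs" and n: "3 \<le> length cs" and i: "i < length cs"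
  defines "L \<equiv> rotate (Suc i) cs"
  shows "L \<noteq> [] \<and> length L = length cs \<and> distinct L \<and> hd L = cs ! (Suc i mod length cs) \<and>
         last L = cs ! i \<and> cpairs L = pairs L @ [(cs ! i, cs ! (Suc i mod length cs))]"
proof -
  have ne: "L \<noteq> []" "length L = length cs" "distinct L" using d n unfolding L_def by auto
  have pos: "0 < length cs" "length cs - 1 < length cs" using n by linarith+
  have "hd L = L ! 0" using ne by (simp add: hd_conv_nth)
  also have "L ! 0 = cs ! ((Suc i + 0) mod length cs)" unfolding L_def using pos by (intro nth_rotate)
  finally have h: "hd L = cs ! (Suc i mod length cs)" by simp
  have "last L = L ! (length cs - 1)" using ne by (simp add: last_conv_nth)
  also have "\<dots> = cs ! ((Suc i + (length cs - 1)) mod length cs)" unfolding L_def using pos by (intro nth_rotate)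
  also have "(Suc i + (length cs - 1)) = i + length cs" using n by simp
  also have "(i + length cs) mod length cs = i" using i by simp
  finally have l: "last L = cs ! i" .
  have "cpairs L = pairs L @ [(last L, hd L)]" unfolding cpairs_def using ne by (simp add: pairs_snoc)
  then show ?thesis using ne h l by simp
qed

lemma GEO:
  assumes pg: "plane_graph gam W F" and oc: "outer_cycle gam W F cs"
    and sw: "succ_on cs v3 w" and e1: "{v3,b} \<in> F" and e2: "{b,w} \<in> F"
    and bv3: "b \<noteq> v3" and bw: "b \<noteq> w"
  shows "\<not> clockwise gam [w,v3,b]"
proof
  assume cwT: "clockwise gam [w,v3,b]"
  note OC = oc_parts[OF oc]
  note cyc = OC(1)
  note CP = cyc_props[OF pg cyc]
  note CB = cyc_basic[OF pg cyc]
  define G where "G = path_image (cycle_path gam cs)"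
  define n where "n = length cs"
  have csne: "cs \<noteq> []" using CB by blast
  have n3: "3 \<le> n" using CB unfolding n_def by blast
  have CE: "\<forall>(u,v)\<in>set (cpairs cs). {u,v} \<in> F \<and> u \<noteq> v" using CB by blast
  have dist: "distinct cs" using cyc unfolding is_cycle_def by simp
  have Gpath: "path (cycle_path gam cs)" and Gclosed: "pathfinish (cycle_path gam cs) = pathstart (cycle_path gam cs)"
    using CP by simp_all
  have GU: "G = (\<Union>(u,v)\<in>set (cpairs cs). path_image (gam u v))"
    unfolding G_def using CP by (elim conjE)
  have GW: "\<And>z. z \<notin> G \<Longrightarrow> winding_number (cycle_path gam cs) z = (\<Sum>(u,v)\<leftarrow>cpairs cs. winding_number (gam u v) z)"
    unfolding G_def using CP by blast
  obtain i where i: "i < n" "cs ! i = v3" "cs ! (Suc i mod n) = w" using sw unfolding succ_on_def n_def by auto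
  have vw_in: "(v3, w) \<in> set (cpairs cs)" using sw succ_on_cpairs[OF csne] by simp
  then have e0: "{v3,w} \<in> F" and v3w: "v3 \<noteq> w" using CE by auto
  define L where "L = rotate (Suc i) cs"
  have RF: "L \<noteq> [] \<and> length L = n \<and> distinct L \<and> hd L = w \<and> last L = v3 \<and> cpairs L = pairs L @ [(v3, w)]"
    using rot_facts[OF dist n3[unfolded n_def] i(1)[unfolded n_def]] i unfolding L_def n_def by simp
  have rotL: "set (cpairs L) = set (cpairs cs)"
    "\<And>z. sum_list (map (\<lambda>(u,v). winding_number (gam u v) z) (cpairs L)) =
          sum_list (map (\<lambda>(u,v). winding_number (gam u v) z) (cpairs cs))"
    using cpairs_rotate[OF csne] unfolding L_def by blast+
  have pL_F: "{x,y} \<in> F" if xy: "(x,y) \<in> set (pairs L)" for x y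
    using xy rotL(1) RF CE by auto
  have pL_ne: "{x,y} \<noteq> {v3,w}" if xy: "(x,y) \<in> set (pairs L)" for x y
  proof
    assume eq: "{x,y} = {v3,w}"
    obtain j where j: "j + 1 < n" "x = L ! j" "y = L ! (j+1)" using xy RF unfolding set_pairs_nth by auto
    have dL: "distinct L" and lL: "length L = n" and hL: "L ! 0 = w" and tL: "L ! (n - 1) = v3"
      using RF n3 by (auto simp: hd_conv_nth last_conv_nth)
    from eq have "(x = v3 \<and> y = w) \<or> (x = w \<and> y = v3)" by (auto simp: doubleton_eq_iff)
    then show False
    proof
      assume "x = v3 \<and> y = w"
      then have "L ! j = L ! (n - 1)" using j tL by simp
      then have "j = n - 1" using dL lL j n3 nth_eq_iff_index_eq[of L j "n - 1"] by simp
      then show False using j by simp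
    next
      assume "x = w \<and> y = v3"
      then have "L ! j = L ! 0" "L ! (j+1) = L ! (n - 1)" using j tL hL by simp_all
      then have "j = 0" "j + 1 = n - 1" using dL lL j n3 nth_eq_iff_index_eq[of L] by simp_all
      then show False using n3 by simp
    qed
  qed
  note E0 = pg_edge[OF pg e0 v3w]
  have wv3F: "{w,v3} \<in> F" using e0 by (simp add: insert_commute)
  note E0' = pg_edge[OF pg wv3F v3w[symmetric]]
  note E1 = pg_edge[OF pg e1 bv3[symmetric]]
  note E2 = pg_edge[OF pg e2 bw]
  define T where "T = cycle_path gam [w,v3,b]"
  have Teq: "T = gam w v3 +++ (gam v3 b +++ gam b w)" unfolding T_def cycle_path_def by simp
  have Tw: "T = walk_path gam [w,v3,b,w]" unfolding T_def cycle_path_def by simp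
  have l2: "2 \<le> length [w,v3,b,w]" by simp
  have pr: "\<forall>(u,v)\<in>set (pairs [w,v3,b,w]). {u,v} \<in> F" using wv3F e1 e2 by simp
  note TP0 = walk_props[OF pg l2 pr]
  have Tpath: "path T" unfolding Tw using TP0 by (elim conjE)
  have "pathstart (walk_path gam [w,v3,b,w]) = hd [w,v3,b,w]" using TP0 by (elim conjE)
  then have Tst: "pathstart T = w" unfolding Tw by simp
  have "pathfinish (walk_path gam [w,v3,b,w]) = last [w,v3,b,w]" using TP0 by (elim conjE)
  then have Tfi: "pathfinish T = w" unfolding Tw by simp
  have TI0: "path_image T = (\<Union>(u,v)\<in>set (pairs [w,v3,b,w]). path_image (gam u v))"
    unfolding Tw using TP0 by (elim conjE)
  have TW0: "\<forall>z. z \<notin> path_image T \<longrightarrow>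
       winding_number T z = (\<Sum>(u,v)\<leftarrow>pairs [w,v3,b,w]. winding_number (gam u v) z)"
    unfolding Tw using TP0 by (elim conjE)
  have TI: "path_image T = path_image (gam w v3) \<union> path_image (gam v3 b) \<union> path_image (gam b w)"
    unfolding TI0 by (simp add: Un_assoc)
  have TW: "winding_number T z =
     winding_number (gam w v3) z + winding_number (gam v3 b) z + winding_number (gam b w) z"
    if zT: "z \<notin> path_image T" for z
  proof -
    have "winding_number T z = (\<Sum>(u,v)\<leftarrow>pairs [w,v3,b,w]. winding_number (gam u v) z)"
      using TW0 zT by blast
    moreover have "(\<Sum>(u,v)\<leftarrow>pairs [w,v3,b,w]. winding_number (gam u v) z) =
      winding_number (gam w v3) z + winding_number (gam v3 b) z + winding_number (gam b w) z"
      by (simp add: add.assoc)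
    ultimately show ?thesis by simp
  qed
  have c12: "{v3,b} \<noteq> {b,w}" using v3w bv3 by (simp add: doubleton_eq_iff)
  have c01: "{w,v3} \<noteq> {v3,b}" using bw bv3 by (simp add: doubleton_eq_iff)
  have c02: "{w,v3} \<noteq> {b,w}" using bw bv3 v3w by (simp add: doubleton_eq_iff)
  have arc2: "arc (gam v3 b +++ gam b w)"
  proof (rule arc_join)
    show "arc (gam v3 b)" "arc (gam b w)" "pathfinish (gam v3 b) = pathstart (gam b w)" using E1 E2 by simp_all
    show "path_image (gam v3 b) \<inter> path_image (gam b w) \<subseteq> {pathstart (gam b w)}"
    proof -
      have "path_image (gam v3 b) \<inter> path_image (gam b w) \<subseteq> {v3,b} \<inter> {b,w}" by (rule pg_cross[OF pg e1 e2 c12])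
      also have "{v3,b} \<inter> {b,w} = {b}" using v3w bv3 bw by blast
      finally show ?thesis using E2 by simp
    qed
  qed
  have "simple_path T" unfolding Teq
  proof (rule simple_path_join_loop)
    show "arc (gam w v3)" using E0' by simp
    show "arc (gam v3 b +++ gam b w)" by (rule arc2)
    show "pathfinish (gam w v3) = pathstart (gam v3 b +++ gam b w)" using E0' E1 by simp
    show "pathfinish (gam v3 b +++ gam b w) = pathstart (gam w v3)" using E0' E2 by simp
    have "path_image (gam w v3) \<inter> path_image (gam v3 b) \<subseteq> {w,v3}" using pg_cross[OF pg wv3F e1 c01] by blast
    moreover have "path_image (gam w v3) \<inter> path_image (gam b w) \<subseteq> {w,v3}" using pg_cross[OF pg wv3F e2 c02] by blast
    moreover have "path_image (gam v3 b +++ gam b w) = path_image (gam v3 b) \<union> path_image (gam b w)"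
      using E1 E2 by (simp add: path_image_join)
    moreover have "{pathstart (gam w v3), pathstart (gam v3 b +++ gam b w)} = {w,v3}" using E0' E1 by simp
    ultimately show "path_image (gam w v3) \<inter> path_image (gam v3 b +++ gam b w) \<subseteq>
      {pathstart (gam w v3), pathstart (gam v3 b +++ gam b w)}" by blast
  qed
  then have JT: "frontier (inside (path_image T)) = path_image T" using Jordan_inside_outside Tst Tfi by simp
  define P where "P = walk_path gam (L @ [b, w])"
  have pP: "pairs (L @ [b, w]) = pairs L @ [(v3,b),(b,w)]"
    using pairs_append[of L b "[w]"] pairs_snoc[of L b] RF by simp
  have Pl2: "2 \<le> length (L @ [b,w])" by simp
  have Ppr: "\<forall>(u,v)\<in>set (pairs (L @ [b, w])). {u,v} \<in> F" unfolding pP using pL_F e1 e2 by auto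
  note PP0 = walk_props[OF pg Pl2 Ppr]
  have Ppath: "path P" unfolding P_def using PP0 by (elim conjE)
  have Pst: "pathstart P = hd (L @ [b,w])" unfolding P_def using PP0 by (elim conjE)
  have Pfi: "pathfinish P = last (L @ [b,w])" unfolding P_def using PP0 by (elim conjE)
  have PI0: "path_image P = (\<Union>(u,v)\<in>set (pairs (L @ [b, w])). path_image (gam u v))"
    unfolding P_def using PP0 by (elim conjE)
  have PW0: "\<forall>z. z \<notin> path_image P \<longrightarrow>
       winding_number P z = (\<Sum>(u,v)\<leftarrow>pairs (L @ [b, w]). winding_number (gam u v) z)"
    unfolding P_def using PP0 by (elim conjE)
  have Pcl: "pathfinish P = pathstart P" using Pst Pfi RF by (simp add: hd_append)
  have PI: "path_image P = (\<Union>(u,v)\<in>set (pairs L). path_image (gam u v)) \<union> path_image (gam v3 b) \<union> path_image (gam b w)"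
    unfolding PI0 pP by auto
  have PW: "winding_number P z =
     (\<Sum>(u,v)\<leftarrow>pairs L. winding_number (gam u v) z) + winding_number (gam v3 b) z + winding_number (gam b w) z"
    if zP: "z \<notin> path_image P" for z
  proof -
    have "winding_number P z = (\<Sum>(u,v)\<leftarrow>pairs (L @ [b, w]). winding_number (gam u v) z)"
      using PW0 zP by blast
    then show ?thesis unfolding pP by (simp add: add.assoc)
  qed
  have GI: "G = (\<Union>(u,v)\<in>set (pairs L). path_image (gam u v)) \<union> path_image (gam v3 w)"
    unfolding GU rotL(1)[symmetric] using RF by auto
  have alg: "winding_number P z = winding_number (cycle_path gam cs) z + winding_number T z"
    if zG: "z \<notin> G" and zT: "z \<notin> path_image T" for z
  proof -
    have zP: "z \<notin> path_image P" using zG zT unfolding PI GI TI by blast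
    have za: "z \<notin> path_image (gam v3 w)" using zG unfolding GI by blast
    have "winding_number (cycle_path gam cs) z = (\<Sum>(u,v)\<leftarrow>cpairs L. winding_number (gam u v) z)"
      using GW[OF zG] rotL(2) by simp
    also have "\<dots> = (\<Sum>(u,v)\<leftarrow>pairs L. winding_number (gam u v) z) + winding_number (gam v3 w) z"
      using RF by simp
    finally have g: "winding_number (cycle_path gam cs) z = (\<Sum>(u,v)\<leftarrow>pairs L. winding_number (gam u v) z) + winding_number (gam v3 w) z" .
    have "winding_number (gam w v3) z = - winding_number (gam v3 w) z"
      using E0 za winding_number_reversepath[of "gam v3 w" z] arc_imp_path by auto
    then show ?thesis using g PW[OF zP] TW[OF zT] by simp
  qed
  define p where "p = gam v3 w (1/2)"
  have pa: "p \<in> path_image (gam v3 w)" unfolding p_def path_image_def by auto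
  have pnot: "p \<noteq> v3" "p \<noteq> w"
  proof -
    have inj: "inj_on (gam v3 w) {0..1}" using E0 unfolding arc_def by simp
    have "gam v3 w (1/2) \<noteq> gam v3 w 0" "gam v3 w (1/2) \<noteq> gam v3 w 1"
      using inj_onD[OF inj, of "1/2" 0] inj_onD[OF inj, of "1/2" 1] by auto
    then show "p \<noteq> v3" "p \<noteq> w" using E0 unfolding p_def pathstart_def pathfinish_def by auto
  qed
  have pP: "p \<notin> path_image P"
  proof
    assume "p \<in> path_image P"
    then consider (a) x y where "(x,y) \<in> set (pairs L)" "p \<in> path_image (gam x y)"
      | (b) "p \<in> path_image (gam v3 b)" | (c) "p \<in> path_image (gam b w)" unfolding PI by blast
    then show False
    proof cases
      case a
      then have "p \<in> {v3,w} \<inter> {x,y}" using pg_cross[OF pg e0 pL_F[OF a(1)] pL_ne[OF a(1), THEN not_sym]] pa by blast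
      then show False using pnot by blast
    next
      case b
      have "{v3,w} \<noteq> {v3,b}" using bw by (auto simp: doubleton_eq_iff)
      then have "p \<in> {v3,w} \<inter> {v3,b}" using pg_cross[OF pg e0 e1] pa b by blast
      then show False using pnot by blast
    next
      case c
      have "{v3,w} \<noteq> {b,w}" using bv3 by (auto simp: doubleton_eq_iff)
      then have "p \<in> {v3,w} \<inter> {b,w}" using pg_cross[OF pg e0 e2] pa c by blast
      then show False using pnot by blast
    qed
  qed
  have "closed (path_image P)" using Ppath by (simp add: closed_path_image)
  then obtain e where e: "e > 0" "ball p e \<subseteq> - path_image P"
    using pP open_contains_ball[of "- path_image P"] by blast
  have "winding_number P constant_on ball p e"
    using Ppath Pcl e by (intro winding_number_constant) auto
  then obtain k where k: "\<And>x. x \<in> ball p e \<Longrightarrow> winding_number P x = k" unfolding constant_on_def by blast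
  have pT: "p \<in> path_image T" using pa TI E0' by auto
  have pG: "p \<in> G" using pa GI by blast
  have Tdrawn: "path_image T \<subseteq> drawn gam W F" unfolding TI
    using edge_in_drawn[OF wv3F v3w[symmetric]] edge_in_drawn[OF e1 bv3[symmetric]] edge_in_drawn[OF e2 bw] by blast
  note INS1 = INS(1)[OF pg oc, of T] and INS2 = INS(2)[OF pg oc, of T]
  have Tcl: "path T" "pathfinish T = pathstart T" using Tpath Tst Tfi by simp_all
  obtain z where z: "z \<in> ball p e" "z \<in> inside (path_image T)"
    using closure_ball_meet[of p "inside (path_image T)" e] pT JT e(1) frontier_def by blast
  have zG: "z \<in> inside G" using INS1 Tcl Tdrawn z(2) unfolding G_def by blast
  have "winding_number (cycle_path gam cs) z = -1" using OC(3) zG unfolding clockwise_def G_def by blast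
  moreover have "winding_number T z = -1" using cwT z(2) unfolding clockwise_def T_def by blast
  moreover have "z \<notin> G" using zG inside_no_overlap by blast
  moreover have "z \<notin> path_image T" using z(2) inside_no_overlap by blast
  ultimately have wz: "winding_number P z = -2" using alg by simp
  have frO: "frontier (outside G) = G" using OUT[OF pg oc] unfolding G_def by blast
  obtain z' where z': "z' \<in> ball p e" "z' \<in> outside G"
    using closure_ball_meet[of p "outside G" e] pG frO e(1) frontier_def by blast
  have "winding_number (cycle_path gam cs) z' = 0"
    using winding_number_zero_in_outside[OF Gpath Gclosed] z'(2) unfolding G_def by blast
  moreover have z'T: "z' \<in> outside (path_image T)" using INS2 Tcl Tdrawn z'(2) unfolding G_def by blast
  then have "winding_number T z' = 0" using winding_number_zero_in_outside[OF Tcl] by blast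
  moreover have "z' \<notin> G" using z'(2) outside_no_overlap by blast
  moreover have "z' \<notin> path_image T" using z'T outside_no_overlap by blast
  ultimately have wz': "winding_number P z' = 0" using alg by simp
  show False using k[OF z(1)] k[OF z'(1)] wz wz' by simp
qed


lemma tri_props:
  assumes pg: "plane_graph gam W F" and t: "is_triangle F a b c"
  shows "path_image (cycle_path gam [a,b,c]) = path_image (gam a b) \<union> path_image (gam b c) \<union> path_image (gam c a)"
    and "z \<notin> path_image (cycle_path gam [a,b,c]) \<Longrightarrow> winding_number (cycle_path gam [a,b,c]) z =
           winding_number (gam a b) z + winding_number (gam b c) z + winding_number (gam c a) z"
proof -
  have cw: "cycle_path gam [a,b,c] = walk_path gam [a,b,c,a]" unfolding cycle_path_def by simp
  have l2: "2 \<le> length [a,b,c,a]" by simp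
  have pr: "\<forall>(u,v)\<in>set (pairs [a,b,c,a]). {u,v} \<in> F" using t unfolding is_triangle_def by simp
  note P0 = walk_props[OF pg l2 pr]
  have I0: "path_image (walk_path gam [a,b,c,a]) = (\<Union>(u,v)\<in>set (pairs [a,b,c,a]). path_image (gam u v))"
    using P0 by (elim conjE)
  then show "path_image (cycle_path gam [a,b,c]) = path_image (gam a b) \<union> path_image (gam b c) \<union> path_image (gam c a)"
    unfolding cw by (simp add: Un_assoc)
  have W0: "\<forall>z. z \<notin> path_image (walk_path gam [a,b,c,a]) \<longrightarrow>
       winding_number (walk_path gam [a,b,c,a]) z = (\<Sum>(u,v)\<leftarrow>pairs [a,b,c,a]. winding_number (gam u v) z)"
    using P0 by (elim conjE)
  assume z: "z \<notin> path_image (cycle_path gam [a,b,c])"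
  then have "winding_number (walk_path gam [a,b,c,a]) z = (\<Sum>(u,v)\<leftarrow>pairs [a,b,c,a]. winding_number (gam u v) z)"
    using W0 unfolding cw by blast
  then show "winding_number (cycle_path gam [a,b,c]) z =
           winding_number (gam a b) z + winding_number (gam b c) z + winding_number (gam c a) z"
    unfolding cw by (simp add: add.assoc)
qed

lemma tri_rot: "is_triangle F a b c \<Longrightarrow> is_triangle F b c a"
  unfolding is_triangle_def by auto

lemma cw_rot:
  assumes pg: "plane_graph gam W F" and t: "is_triangle F a b c" and cw: "clockwise gam [a,b,c]"
  shows "clockwise gam [b,c,a]"
proof -
  have t2: "is_triangle F b c a" using t by (rule tri_rot)
  have I: "path_image (cycle_path gam [b,c,a]) = path_image (cycle_path gam [a,b,c])"
    unfolding tri_props(1)[OF pg t] tri_props(1)[OF pg t2] by blast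
  show ?thesis unfolding clockwise_def
  proof
    fix z assume z: "z \<in> inside (path_image (cycle_path gam [b, c, a]))"
    then have z1: "z \<in> inside (path_image (cycle_path gam [a, b, c]))" using I by simp
    have zn: "z \<notin> path_image (cycle_path gam [a, b, c])" using z1 inside_no_overlap by blast
    have zn2: "z \<notin> path_image (cycle_path gam [b, c, a])" using zn I by simp
    have "winding_number (cycle_path gam [a, b, c]) z = -1" using cw z1 unfolding clockwise_def by blast
    then show "winding_number (cycle_path gam [b, c, a]) z = -1"
      using tri_props(2)[OF pg t zn] tri_props(2)[OF pg t2 zn2] by (simp add: algebra_simps)
  qed
qed

lemma idx3:
  fixes i n :: nat
  assumes "i < n" "3 \<le> n"
  shows "i \<noteq> Suc i mod n" "i \<noteq> Suc (Suc i) mod n" "Suc i mod n \<noteq> Suc (Suc i) mod n"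
    "Suc (Suc i mod n) mod n = Suc (Suc i) mod n"
    "Suc (Suc i) mod n < n" "Suc i mod n < n"
proof -
  have p: "0 < n" using assms by linarith
  show "Suc (Suc i mod n) mod n = Suc (Suc i) mod n" by (simp add: mod_Suc_eq)
  show "Suc (Suc i) mod n < n" "Suc i mod n < n" using p by simp_all
  have A: "Suc i mod n = (if Suc i = n then 0 else Suc i)" using assms by (simp add: mod_Suc)
  have B: "Suc (Suc i) mod n = (if Suc (Suc i mod n) = n then 0 else Suc (Suc i mod n))" by (simp add: mod_Suc)
  show "i \<noteq> Suc i mod n" "i \<noteq> Suc (Suc i) mod n" "Suc i mod n \<noteq> Suc (Suc i) mod n"
    using assms unfolding B A by auto
qed

lemma succ_idx:
  assumes d: "distinct cs" and i: "i < length cs" and s: "succ_on cs (cs ! i) y"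
  shows "y = cs ! (Suc i mod length cs)"
proof -
  obtain j where j: "j < length cs" "cs ! j = cs ! i" "cs ! (Suc j mod length cs) = y"
    using s unfolding succ_on_def by auto
  have "j = i" using j i d nth_eq_iff_index_eq by metis
  then show ?thesis using j by simp
qed

lemma pred_idx:
  assumes d: "distinct cs" and i: "i < length cs" and s: "succ_on cs y (cs ! (Suc i mod length cs))"
  shows "y = cs ! i"
proof -
  obtain j where j: "j < length cs" "cs ! j = y" "cs ! (Suc j mod length cs) = cs ! (Suc i mod length cs)"
    using s unfolding succ_on_def by auto
  have p: "0 < length cs" using i by linarith
  have lt: "Suc j mod length cs < length cs" "Suc i mod length cs < length cs" using p by simp_all
  have e: "Suc j mod length cs = Suc i mod length cs" using j(3) lt d nth_eq_iff_index_eq by metis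
  have "j = i"
  proof (cases "Suc j < length cs")
    case True
    show ?thesis
    proof (cases "Suc i < length cs")
      case True2: True
      then show ?thesis using e True by simp
    next
      case False
      then have "Suc i = length cs" using i by simp
      then show ?thesis using e True by simp
    qed
  next
    case False
    then have sj: "Suc j = length cs" using j by simp
    show ?thesis
    proof (cases "Suc i < length cs")
      case True
      then show ?thesis using e sj by simp
    next
      case False
      then show ?thesis using sj i by simp
    qed
  qed
  then show ?thesis using j by simp
qed

lemma three_split: "3 \<le> length r \<Longrightarrow> r = r!0 # r!1 # r!2 # drop 3 r"
  by (cases r; cases "tl r"; cases "tl (tl r)") auto

lemma CH:
  assumes cyc: "is_cycle F cs" and s12: "succ_on cs v1 v2" and s23: "succ_on cs v2 v3"
    and e13: "{v1,v3} \<in> F" and nc: "\<not> has_chord F cs"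
  shows "succ_on cs v3 v1"
proof -
  define n where "n = length cs"
  have d: "distinct cs" and n3: "3 \<le> n" using cyc unfolding is_cycle_def n_def by auto
  obtain i where i: "i < n" "cs ! i = v1" using s12 unfolding succ_on_def n_def by auto
  have v2: "v2 = cs ! (Suc i mod n)" using succ_idx[OF d, of i v2] i s12 unfolding n_def by simp
  note I3 = idx3[OF i(1) n3]
  have v3: "v3 = cs ! (Suc (Suc i) mod n)"
    using succ_idx[OF d, of "Suc i mod n" v3] s23 v2 I3 unfolding n_def by simp
  show ?thesis
  proof (cases "n = 3")
    case True
    have e: "Suc (Suc (Suc i) mod n) mod n = i" using True i(1) by (simp add: mod_Suc_eq)
    have "Suc (Suc i) mod n < n \<and> cs ! (Suc (Suc i) mod n) = v3 \<and> cs ! ((Suc (Suc i) mod n + 1) mod n) = v1"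
      using e v3 i I3 by simp
    then show ?thesis unfolding succ_on_def n_def by blast
  next
    case False
    then have n4: "4 \<le> n" using n3 by simp
    define r where "r = rotate i cs"
    have lr: "length r = n" unfolding r_def n_def by simp
    have csne: "0 < length cs" using i unfolding n_def by linarith
    have r0: "r ! 0 = v1" unfolding r_def using i nth_rotate[OF csne, of i] unfolding n_def by simp
    have r1: "r ! 1 = v2" unfolding r_def using i n3 nth_rotate[of 1 cs i] v2 unfolding n_def by simp
    have r2: "r ! 2 = v3" unfolding r_def using i n3 nth_rotate[of 2 cs i] v3 unfolding n_def by simp
    have "r = v1 # [v2] @ v3 # drop 3 r" using three_split[of r] lr n3 r0 r1 r2 by simp
    moreover have "drop 3 r \<noteq> []" using lr n4 by simp
    ultimately have "has_chord F cs" unfolding has_chord_def r_def using e13 by blast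
    then show ?thesis using nc by simp
  qed
qed

lemma pairs_not_ends:
  assumes d: "distinct L" and n: "3 \<le> length L" and xy: "(x,y) \<in> set (pairs L)"
  shows "{x,y} \<noteq> {hd L, last L}"
proof
  assume eq: "{x,y} = {hd L, last L}"
  define n where "n = length L"
  obtain j where j: "j + 1 < n" "x = L ! j" "y = L ! (j+1)" using xy unfolding set_pairs_nth n_def by auto
  have Lne: "L \<noteq> []" using n by (cases L) auto
  have hL: "hd L = L ! 0" and tL: "last L = L ! (n - 1)" using Lne unfolding n_def by (auto simp: hd_conv_nth last_conv_nth)
  from eq have "(x = hd L \<and> y = last L) \<or> (x = last L \<and> y = hd L)" by (auto simp: doubleton_eq_iff)
  then show False
  proof
    assume "x = hd L \<and> y = last L"
    then have "L ! j = L ! 0" "L ! (j+1) = L ! (n - 1)" using j hL tL by simp_all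
    moreover have "j < length L" "0 < length L" "j + 1 < length L" "n - 1 < length L" using j n unfolding n_def by linarith+
    ultimately have "j = 0" "j + 1 = n - 1" using nth_eq_iff_index_eq[OF d] by metis+
    then show False using n unfolding n_def by simp
  next
    assume "x = last L \<and> y = hd L"
    then have "L ! j = L ! (n - 1)" using j tL by simp
    then have "j = n - 1" using d j n nth_eq_iff_index_eq[of L j "n - 1"] unfolding n_def by simp
    then show False using j by simp
  qed
qed


lemma pairs_rev: "set (pairs (rev xs)) = (\<lambda>(u,v). (v,u)) ` set (pairs xs)"
proof (induction xs)
  case Nil then show ?case by simp
next
  case (Cons x xs)
  show ?case
  proof (cases xs)
    case Nil then show ?thesis by simp
  next
    case (Cons y ys)
    have "pairs (rev (x # xs)) = pairs (rev xs) @ [(y, x)]"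
      using pairs_snoc[of "rev xs" x] Cons by (simp add: last_rev)
    then show ?thesis using Cons.IH \<open>xs = y # ys\<close> by auto
  qed
qed

lemma cyc_list_image:
  assumes pg: "plane_graph gam W F" and l: "2 \<le> length L"
    and E: "\<forall>(u,v)\<in>set (pairs L). {u,v} \<in> F" and e: "{last L, hd L} \<in> F"
  shows "path_image (cycle_path gam L) = (\<Union>(u,v)\<in>set (pairs L). path_image (gam u v)) \<union> path_image (gam (last L) (hd L))"
proof -
  have Lne: "L \<noteq> []" using l by (cases L) auto
  have pe: "pairs (L @ [hd L]) = pairs L @ [(last L, hd L)]" using Lne by (rule pairs_snoc)
  have l2: "2 \<le> length (L @ [hd L])" using l by simp
  have pr: "\<forall>(u,v)\<in>set (pairs (L @ [hd L])). {u,v} \<in> F" unfolding pe using E e by auto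
  have "path_image (walk_path gam (L @ [hd L])) = (\<Union>(u,v)\<in>set (pairs (L @ [hd L])). path_image (gam u v))"
    using walk_props[OF pg l2 pr] by (elim conjE)
  then show ?thesis unfolding cycle_path_def pe by auto
qed

lemma SPLIT:
  assumes pg: "plane_graph gam W F" and oc: "outer_cycle gam W F cs"
    and rk: "rotate k cs = a # p @ b # q" and pne: "p \<noteq> []" and qne: "q \<noteq> []"
  shows "set (cpairs cs) = set (pairs (a # p @ [b])) \<union> set (pairs (b # q @ [a]))"
    and "distinct (a # p @ [b])" "distinct (b # q @ [a])" "set (a # p @ [b]) \<inter> set (b # q @ [a]) = {a,b}"
    and "3 \<le> length (a # p @ [b])" "3 \<le> length (b # q @ [a])" "a \<noteq> b"
    and "\<forall>(u,v)\<in>set (pairs (a # p @ [b])) \<union> set (pairs (b # q @ [a])). {u,v} \<in> F \<and> u \<noteq> v"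
    and "path_image (cycle_path gam cs) = (\<Union>(u,v)\<in>set (pairs (a # p @ [b])). path_image (gam u v)) \<union>
            (\<Union>(u,v)\<in>set (pairs (b # q @ [a])). path_image (gam u v))"
proof -
  have cyc: "is_cycle F cs" using oc_parts[OF oc] by simp
  note CB = cyc_basic[OF pg cyc]
  have csne: "cs \<noteq> []" using CB by blast
  have CE: "\<forall>(u,v)\<in>set (cpairs cs). {u,v} \<in> F \<and> u \<noteq> v" using CB by blast
  have "cpairs (rotate k cs) = pairs ((a # p) @ b # (q @ [a]))" unfolding rk cpairs_def by simp
  also have "\<dots> = pairs (a # p @ [b]) @ pairs (b # q @ [a])" by (subst pairs_append) simp
  finally have cr: "cpairs (rotate k cs) = pairs (a # p @ [b]) @ pairs (b # q @ [a])" .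
  have "set (cpairs (rotate k cs)) = set (cpairs cs)" using cpairs_rotate[OF csne, of k "\<lambda>_. 0::nat"] by blast
  then show S1: "set (cpairs cs) = set (pairs (a # p @ [b])) \<union> set (pairs (b # q @ [a]))" using cr by simp
  have "distinct (rotate k cs)" using cyc unfolding is_cycle_def by simp
  then have d: "distinct (a # p @ b # q)" using rk by simp
  then show "distinct (a # p @ [b])" "distinct (b # q @ [a])" "a \<noteq> b" by auto
  show "set (a # p @ [b]) \<inter> set (b # q @ [a]) = {a,b}" using d by auto
  show "3 \<le> length (a # p @ [b])" using pne by (cases p) simp_all
  show "3 \<le> length (b # q @ [a])" using qne by (cases q) simp_all
  show "\<forall>(u,v)\<in>set (pairs (a # p @ [b])) \<union> set (pairs (b # q @ [a])). {u,v} \<in> F \<and> u \<noteq> v"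
    using CE S1 by simp
  have "path_image (cycle_path gam cs) = (\<Union>(u,v)\<in>set (cpairs cs). path_image (gam u v))"
    using cyc_props[OF pg cyc] by (elim conjE)
  then show "path_image (cycle_path gam cs) = (\<Union>(u,v)\<in>set (pairs (a # p @ [b])). path_image (gam u v)) \<union>
            (\<Union>(u,v)\<in>set (pairs (b # q @ [a])). path_image (gam u v))" unfolding S1 by blast
qed


lemma arc_mid:
  assumes "arc g" obtains m where "m \<in> path_image g" "m \<noteq> pathstart g" "m \<noteq> pathfinish g"
proof -
  have inj: "inj_on g {0..1}" using assms unfolding arc_def by simp
  have "g (1/2) \<noteq> g 0" "g (1/2) \<noteq> g 1"
    using inj_onD[OF inj, of "1/2" 0] inj_onD[OF inj, of "1/2" 1] by auto
  moreover have "g (1/2) \<in> path_image g" unfolding path_image_def by auto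
  ultimately show ?thesis using that unfolding pathstart_def pathfinish_def by blast
qed

lemma THETA:
  assumes pg: "plane_graph gam W F" and oc: "outer_cycle gam W F cs"
    and rk: "rotate k cs = a # p @ b # q" and pne: "p \<noteq> []" and qne: "q \<noteq> []"
    and ab: "{a,b} \<in> F"
  shows "W \<inter> closed_disk gam (a # p @ [b]) \<inter> closed_disk gam (b # q @ [a]) \<subseteq> {a,b}"
proof -
  define A where "A = a # p @ [b]"
  define B where "B = b # q @ [a]"
  note S = SPLIT[OF pg oc rk pne qne]
  have S1: "set (cpairs cs) = set (pairs A) \<union> set (pairs B)" using S(1) unfolding A_def B_def .
  have dA: "distinct A" and dB: "distinct B" and AB: "set A \<inter> set B = {a,b}" and lA: "3 \<le> length A"
    and lB: "3 \<le> length B" and anb: "a \<noteq> b"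
    using S(2-7) unfolding A_def B_def by auto
  have EA: "\<forall>(u,v)\<in>set (pairs A). {u,v} \<in> F \<and> u \<noteq> v" and EB: "\<forall>(u,v)\<in>set (pairs B). {u,v} \<in> F \<and> u \<noteq> v"
    using S(8) unfolding A_def B_def by auto
  define UA where "UA = (\<Union>(u,v)\<in>set (pairs A). path_image (gam u v))"
  define UB where "UB = (\<Union>(u,v)\<in>set (pairs B). path_image (gam u v))"
  have G: "path_image (cycle_path gam cs) = UA \<union> UB" using S(9) unfolding UA_def UB_def A_def B_def .
  define c1 where "c1 = walk_path gam A"
  define c2 where "c2 = walk_path gam (rev B)"
  define c where "c = gam a b"
  note Eab = pg_edge[OF pg ab anb]
  have hA: "hd A = a" "last A = b" and hB: "hd B = b" "last B = a" unfolding A_def B_def by simp_all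
  have l2A: "2 \<le> length A" using lA by simp
  have prA: "\<forall>(u,v)\<in>set (pairs A). {u,v} \<in> F" using EA by auto
  note WA = walk_props[OF pg l2A prA]
  have c1a: "arc c1" unfolding c1_def using walk_arc[OF pg l2A prA dA] .
  have c1s: "pathstart c1 = a" "pathfinish c1 = b" unfolding c1_def using WA hA by simp_all
  have c1i: "path_image c1 = UA" unfolding c1_def UA_def using WA by (elim conjE)
  have l2B: "2 \<le> length (rev B)" using lB by simp
  have prB: "\<forall>(u,v)\<in>set (pairs (rev B)). {u,v} \<in> F"
    unfolding pairs_rev using EB by (auto simp: insert_commute)
  have dB': "distinct (rev B)" using dB by simp
  note WB = walk_props[OF pg l2B prB]
  have c2a: "arc c2" unfolding c2_def using walk_arc[OF pg l2B prB dB'] .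
  have c2s: "pathstart c2 = a" "pathfinish c2 = b" unfolding c2_def using WB hB lB
    by (simp_all add: hd_rev last_rev)
  have "path_image c2 = (\<Union>(u,v)\<in>set (pairs (rev B)). path_image (gam u v))"
    unfolding c2_def using WB by (elim conjE)
  also have "\<dots> = UB" unfolding UB_def pairs_rev
  proof -
    have "path_image (gam v u) = path_image (gam u v)" if "(u,v) \<in> set (pairs B)" for u v
      using pg_rev_image[OF pg] EB that by auto
    then show "(\<Union>(u,v)\<in>(\<lambda>(u,v). (v,u)) ` set (pairs B). path_image (gam u v)) =
      (\<Union>(u,v)\<in>set (pairs B). path_image (gam u v))" by auto
  qed
  finally have c2i: "path_image c2 = UB" .
  have ca: "arc c" "pathstart c = a" "pathfinish c = b" using Eab unfolding c_def by simp_all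
  define Ic where "Ic = path_image c"
  have WIc: "W \<inter> Ic = {a,b}" using Eab unfolding Ic_def c_def by (simp add: Int_commute)
  have ends: "a \<in> UA" "b \<in> UA" "a \<in> UB" "b \<in> UB" "a \<in> Ic" "b \<in> Ic"
    using c1s c2s ca c1i c2i pathstart_in_path_image pathfinish_in_path_image unfolding Ic_def by metis+
  have X1: "UA \<inter> UB \<subseteq> {a,b}"
  proof
    fix z assume z: "z \<in> UA \<inter> UB"
    then obtain u v x y where uv: "(u,v) \<in> set (pairs A)" "z \<in> path_image (gam u v)"
      and xy: "(x,y) \<in> set (pairs B)" "z \<in> path_image (gam x y)" unfolding UA_def UB_def by blast
    have uvA: "u \<in> set A" "v \<in> set A" and xyB: "x \<in> set B" "y \<in> set B"
      using set_pairs_sub[OF uv(1)] set_pairs_sub[OF xy(1)] by auto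
    have Fu: "{u,v} \<in> F" "u \<noteq> v" using EA uv(1) by auto
    have Fx: "{x,y} \<in> F" using EB xy(1) by auto
    show "z \<in> {a,b}"
    proof (cases "{u,v} = {x,y}")
      case True
      then have "u \<in> set B" "v \<in> set B" using xyB by (auto simp: doubleton_eq_iff)
      then have "u \<in> {a,b}" "v \<in> {a,b}" using uvA AB by blast+
      then have "{u,v} = {hd A, last A}" using Fu(2) hA by auto
      then show ?thesis using pairs_not_ends[OF dA lA uv(1)] by simp
    next
      case False
      then have "z \<in> {u,v} \<inter> {x,y}" using pg_cross[OF pg Fu(1) Fx] uv xy by blast
      then show ?thesis using uvA xyB AB by blast
    qed
  qed
  have X2: "UA \<inter> Ic \<subseteq> {a,b}"
  proof
    fix z assume z: "z \<in> UA \<inter> Ic"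
    then obtain u v where uv: "(u,v) \<in> set (pairs A)" "z \<in> path_image (gam u v)" unfolding UA_def by blast
    have Fu: "{u,v} \<in> F" using EA uv(1) by auto
    have "{u,v} \<noteq> {a,b}" using pairs_not_ends[OF dA lA uv(1)] hA by simp
    then have "z \<in> {u,v} \<inter> {a,b}" using pg_cross[OF pg Fu ab] uv z unfolding Ic_def c_def by blast
    then show "z \<in> {a,b}" by blast
  qed
  have X3: "UB \<inter> Ic \<subseteq> {a,b}"
  proof
    fix z assume z: "z \<in> UB \<inter> Ic"
    then obtain u v where uv: "(u,v) \<in> set (pairs B)" "z \<in> path_image (gam u v)" unfolding UB_def by blast
    have Fu: "{u,v} \<in> F" using EB uv(1) by auto
    have "{u,v} \<noteq> {b,a}" using pairs_not_ends[OF dB lB uv(1)] hB by simp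
    moreover have "{b,a} = {a,b}" by blast
    ultimately have "{u,v} \<noteq> {a,b}" by simp
    then have "z \<in> {u,v} \<inter> {a,b}" using pg_cross[OF pg Fu ab] uv z unfolding Ic_def c_def by blast
    then show "z \<in> {a,b}" by blast
  qed
  obtain m where m0: "m \<in> path_image c" "m \<noteq> pathstart c" "m \<noteq> pathfinish c" by (rule arc_mid[OF ca(1)])
  have m: "m \<in> Ic" "m \<noteq> a" "m \<noteq> b" using m0 ca unfolding Ic_def by simp_all
  have mG: "m \<notin> UA \<union> UB" using m X2 X3 by blast
  have "m \<in> drawn gam W F" using edge_in_drawn[OF ab anb] m unfolding Ic_def c_def by blast
  moreover have "outside (path_image (cycle_path gam cs)) \<inter> drawn gam W F = {}" using OUT[OF pg oc] by (elim conjE)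
  ultimately have "m \<notin> outside (UA \<union> UB)" unfolding G by blast
  then have mI: "m \<in> inside (UA \<union> UB)" using mG inside_Un_outside by blast
  obtain T1: "inside (path_image c1 \<union> path_image c) \<inter> inside (path_image c2 \<union> path_image c) = {}"
    and T2: "inside (path_image c1 \<union> path_image c) \<union> inside (path_image c2 \<union> path_image c) \<union>
           (path_image c - {a,b}) = inside (path_image c1 \<union> path_image c2)"
  proof (rule split_inside_simple_closed_curve)
    show "simple_path c1" "simple_path c2" "simple_path c" using c1a c2a ca arc_imp_simple_path by auto
    show "pathstart c1 = a" "pathfinish c1 = b" "pathstart c2 = a" "pathfinish c2 = b"
      "pathstart c = a" "pathfinish c = b" "a \<noteq> b" using c1s c2s ca anb by auto
    show "path_image c1 \<inter> path_image c2 = {a, b}" using X1 ends c1i c2i by blast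
    show "path_image c1 \<inter> path_image c = {a, b}" using X2 ends c1i unfolding Ic_def by blast
    show "path_image c2 \<inter> path_image c = {a, b}" using X3 ends c2i unfolding Ic_def by blast
    show "path_image c \<inter> inside (path_image c1 \<union> path_image c2) \<noteq> {}" using m mI c1i c2i unfolding Ic_def by blast
  qed auto
  have I1: "inside (UA \<union> Ic) \<inter> inside (UB \<union> Ic) = {}" using T1 c1i c2i unfolding Ic_def by simp
  have I2: "inside (UA \<union> Ic) \<subseteq> inside (UA \<union> UB)" "inside (UB \<union> Ic) \<subseteq> inside (UA \<union> UB)"
    using T2 c1i c2i unfolding Ic_def by blast+
  have CDA: "closed_disk gam A = (UA \<union> Ic) \<union> inside (UA \<union> Ic)"
  proof -
    have "{last A, hd A} \<in> F" using ab hA by (simp add: insert_commute)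
    then have "path_image (cycle_path gam A) = UA \<union> path_image (gam b a)"
      using cyc_list_image[OF pg l2A prA] hA unfolding UA_def by simp
    moreover have "path_image (gam b a) = Ic" using pg_rev_image[OF pg ab] unfolding Ic_def c_def by simp
    ultimately show ?thesis unfolding closed_disk_def by simp
  qed
  have CDB: "closed_disk gam B = (UB \<union> Ic) \<union> inside (UB \<union> Ic)"
  proof -
    have prB0: "\<forall>(u,v)\<in>set (pairs B). {u,v} \<in> F" using EB by auto
    have "{last B, hd B} \<in> F" using ab hB by simp
    then have "path_image (cycle_path gam B) = UB \<union> path_image (gam a b)"
      using cyc_list_image[OF pg _ prB0] hB lB unfolding UB_def by simp
    then show ?thesis unfolding closed_disk_def Ic_def c_def by simp
  qed
  have NO1: "inside (UA \<union> Ic) \<inter> (UA \<union> Ic) = {}" "inside (UB \<union> Ic) \<inter> (UB \<union> Ic) = {}"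
    "inside (UA \<union> UB) \<inter> (UA \<union> UB) = {}" by (rule inside_no_overlap)+
  show ?thesis
  proof
    fix x assume x: "x \<in> W \<inter> closed_disk gam (a # p @ [b]) \<inter> closed_disk gam (b # q @ [a])"
    then have xW: "x \<in> W" and xA: "x \<in> (UA \<union> Ic) \<union> inside (UA \<union> Ic)" and xB: "x \<in> (UB \<union> Ic) \<union> inside (UB \<union> Ic)"
      using CDA CDB unfolding A_def B_def by auto
    have "x \<notin> inside (UA \<union> Ic)"
    proof
      assume xi: "x \<in> inside (UA \<union> Ic)"
      then have "x \<in> inside (UA \<union> UB)" using I2 by blast
      then show False using xi xB I1 NO1 by blast
    qed
    moreover have "x \<notin> inside (UB \<union> Ic)"
    proof
      assume xi: "x \<in> inside (UB \<union> Ic)"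
      then have "x \<in> inside (UA \<union> UB)" using I2 by blast
      then show False using xi xA I1 NO1 by blast
    qed
    ultimately have "x \<in> (UA \<union> Ic) \<inter> (UB \<union> Ic)" using xA xB by blast
    then have "x \<in> Ic \<or> x \<in> {a,b}" using X1 by blast
    then show "x \<in> {a,b}" using xW WIc by blast
  qed
qed


lemma diskE_ends:
  assumes pg: "plane_graph gam W F" and e: "{u,t} \<in> disk_E gam F C"
  shows "u \<in> W \<inter> closed_disk gam C \<and> t \<in> W \<inter> closed_disk gam C \<and> {u,t} \<in> F"
proof -
  obtain u' v' where uv: "{u,t} = {u',v'}" "u' \<noteq> v'" "path_image (gam u' v') \<subseteq> closed_disk gam C"
    and eF: "{u,t} \<in> F" using e unfolding disk_E_def by blast
  have F': "{u',v'} \<in> F" using eF uv(1) by simp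
  note E = pg_edge[OF pg F' uv(2)]
  have "u' \<in> closed_disk gam C" "v' \<in> closed_disk gam C"
    using E uv(3) pathstart_in_path_image[of "gam u' v'"] pathfinish_in_path_image[of "gam u' v'"] by auto
  moreover have "u' \<in> W" "v' \<in> W" using pg_edge_in2[OF pg F'] by auto
  moreover have "u \<in> {u',v'}" "t \<in> {u',v'}" using uv(1) by blast+
  ultimately show ?thesis using eF by blast
qed

lemma diskE_sub: "disk_E gam F C \<subseteq> F" unfolding disk_E_def by blast

lemma cyc_vertices:
  assumes pg: "plane_graph gam W F" and l: "2 \<le> length L"
    and E: "\<forall>(u,v)\<in>set (pairs L). {u,v} \<in> F \<and> u \<noteq> v" and e: "{last L, hd L} \<in> F" and ne: "last L \<noteq> hd L"
  shows "set L \<subseteq> path_image (cycle_path gam L)"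
proof
  have E': "\<forall>(u,v)\<in>set (pairs L). {u,v} \<in> F" using E by auto
  note CI = cyc_list_image[OF pg l E' e]
  fix x assume x: "x \<in> set L"
  then obtain i where i: "i < length L" "x = L ! i" by (auto simp: in_set_conv_nth)
  show "x \<in> path_image (cycle_path gam L)"
  proof (cases "i + 1 < length L")
    case True
    then have pr: "(x, L ! (i+1)) \<in> set (pairs L)" unfolding set_pairs_nth using i by auto
    then have "{x, L ! (i+1)} \<in> F" "x \<noteq> L ! (i+1)" using E by auto
    then have "x \<in> path_image (gam x (L ! (i+1)))"
      using pg_edge[OF pg] pathstart_in_path_image by metis
    then show ?thesis unfolding CI using pr by blast
  next
    case False
    then have "i = length L - 1" using i by simp
    moreover have "L \<noteq> []" using l by (cases L) auto
    ultimately have "x = last L" using i by (simp add: last_conv_nth)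
    then have "x \<in> path_image (gam (last L) (hd L))" using pg_edge[OF pg e ne] pathstart_in_path_image by metis
    then show ?thesis unfolding CI by blast
  qed
qed

lemma CHORD:
  assumes pg: "plane_graph gam W F" and oc: "outer_cycle gam W F cs"
    and rk: "rotate k cs = a # p @ b # q" and pne: "p \<noteq> []" and qne: "q \<noteq> []"
    and ab: "{a,b} \<in> F" and s12: "succ_on cs v1 v2"
    and C12: "(C1, C2) \<in> {(a # p @ [b], b # q @ [a]), (b # q @ [a], a # p @ [b])}"
    and v1: "v1 \<in> set C1" and v2: "v2 \<in> set C1"
  shows "W \<inter> closed_disk gam C1 \<inter> closed_disk gam C2 \<subseteq> {a,b}"
    and "{a,b} \<in> disk_E gam F C2"
    and "v1 \<in> W \<inter> closed_disk gam C1" "v2 \<in> W \<inter> closed_disk gam C1"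
    and "{v1,v2} \<in> disk_E gam F C1"
proof -
  define A where "A = a # p @ [b]"
  define B where "B = b # q @ [a]"
  note S = SPLIT[OF pg oc rk pne qne]
  have S1: "set (cpairs cs) = set (pairs A) \<union> set (pairs B)" using S(1) unfolding A_def B_def .
  have dA: "distinct A" and dB: "distinct B" and AB: "set A \<inter> set B = {a,b}" and lA: "3 \<le> length A"
    and lB: "3 \<le> length B" and anb: "a \<noteq> b"
    using S(2-7) unfolding A_def B_def by auto
  have EA: "\<forall>(u,v)\<in>set (pairs A). {u,v} \<in> F \<and> u \<noteq> v" and EB: "\<forall>(u,v)\<in>set (pairs B). {u,v} \<in> F \<and> u \<noteq> v"
    using S(8) unfolding A_def B_def by auto
  have EA': "\<forall>(u,v)\<in>set (pairs A). {u,v} \<in> F" and EB': "\<forall>(u,v)\<in>set (pairs B). {u,v} \<in> F" using EA EB by auto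
  have hA: "hd A = a" "last A = b" and hB: "hd B = b" "last B = a" unfolding A_def B_def by simp_all
  have ba: "{b,a} \<in> F" using ab by (simp add: insert_commute)
  have l2A: "2 \<le> length A" and l2B: "2 \<le> length B" using lA lB by simp_all
  have IA: "path_image (cycle_path gam A) = (\<Union>(u,v)\<in>set (pairs A). path_image (gam u v)) \<union> path_image (gam a b)"
  proof -
    have "path_image (cycle_path gam A) = (\<Union>(u,v)\<in>set (pairs A). path_image (gam u v)) \<union> path_image (gam b a)"
      using cyc_list_image[OF pg l2A EA'] hA ba by simp
    then show ?thesis using pg_rev_image[OF pg ab] by simp
  qed
  have IB: "path_image (cycle_path gam B) = (\<Union>(u,v)\<in>set (pairs B). path_image (gam u v)) \<union> path_image (gam a b)"
    using cyc_list_image[OF pg l2B EB'] hB ab by simp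
  have VA: "set A \<subseteq> path_image (cycle_path gam A)" using cyc_vertices[OF pg l2A EA] hA ba anb by simp
  have VB: "set B \<subseteq> path_image (cycle_path gam B)" using cyc_vertices[OF pg l2B EB] hB ab anb by simp
  have cdA: "path_image (cycle_path gam A) \<subseteq> closed_disk gam A" and cdB: "path_image (cycle_path gam B) \<subseteq> closed_disk gam B"
    unfolding closed_disk_def by blast+
  have TH: "W \<inter> closed_disk gam A \<inter> closed_disk gam B \<subseteq> {a,b}"
    using THETA[OF pg oc rk pne qne ab] unfolding A_def B_def .
  have C12': "(C1 = A \<and> C2 = B) \<or> (C1 = B \<and> C2 = A)" using C12 unfolding A_def B_def by blast
  show "W \<inter> closed_disk gam C1 \<inter> closed_disk gam C2 \<subseteq> {a,b}" using C12' TH by blast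
  have abA: "{a,b} \<in> disk_E gam F A" unfolding disk_E_def using ab anb IA cdA by blast
  have abB: "{a,b} \<in> disk_E gam F B" unfolding disk_E_def using ab anb IB cdB by blast
  show "{a,b} \<in> disk_E gam F C2" using C12' abA abB by blast
  have sC1: "set C1 \<subseteq> W \<inter> closed_disk gam C1"
  proof -
    have "set cs \<subseteq> W" using oc_parts[OF oc] by simp
    moreover have "set (rotate k cs) = set cs" by simp
    ultimately have "set A \<subseteq> W" "set B \<subseteq> W" using rk unfolding A_def B_def by auto
    then show ?thesis using C12' VA VB cdA cdB by blast
  qed
  show "v1 \<in> W \<inter> closed_disk gam C1" "v2 \<in> W \<inter> closed_disk gam C1" using sC1 v1 v2 by blast+
  have csne: "cs \<noteq> []" using rk by auto
  have vp: "(v1,v2) \<in> set (pairs A) \<union> set (pairs B)" using s12 succ_on_cpairs[OF csne] S1 by simp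
  have v12: "v1 \<noteq> v2" using vp EA EB by auto
  have v12F: "{v1,v2} \<in> F" using vp EA EB by auto
  have inA: "{v1,v2} \<in> disk_E gam F A" if "(v1,v2) \<in> set (pairs A)"
  proof -
    have "path_image (gam v1 v2) \<subseteq> closed_disk gam A" using that IA cdA by blast
    then show ?thesis unfolding disk_E_def using v12F v12 by blast
  qed
  have inB: "{v1,v2} \<in> disk_E gam F B" if "(v1,v2) \<in> set (pairs B)"
  proof -
    have "path_image (gam v1 v2) \<subseteq> closed_disk gam B" using that IB cdB by blast
    then show ?thesis unfolding disk_E_def using v12F v12 by blast
  qed
  have ab_set: "{v1,v2} = {a,b}" if "v1 \<in> {a,b}" "v2 \<in> {a,b}" using that v12 by blast
  show "{v1,v2} \<in> disk_E gam F C1"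
  proof (cases "C1 = A")
    case True
    show ?thesis
    proof (cases "(v1,v2) \<in> set (pairs A)")
      case True2: True
      then show ?thesis using inA True by simp
    next
      case False
      then have pB: "(v1,v2) \<in> set (pairs B)" using vp by blast
      then have "v1 \<in> set B" "v2 \<in> set B" using set_pairs_sub[OF pB] by blast+
      then have "v1 \<in> {a,b}" "v2 \<in> {a,b}" using v1 v2 True AB by blast+
      then have "{v1,v2} = {hd B, last B}" using ab_set hB by auto
      then show ?thesis using pairs_not_ends[OF dB lB pB] by simp
    qed
  next
    case False
    then have C1B: "C1 = B" using C12' by blast
    show ?thesis
    proof (cases "(v1,v2) \<in> set (pairs B)")
      case True
      then show ?thesis using inB C1B by simp
    next
      case False
      then have pA: "(v1,v2) \<in> set (pairs A)" using vp by blast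
      then have "v1 \<in> set A" "v2 \<in> set A" using set_pairs_sub[OF pA] by blast+
      then have "v1 \<in> {a,b}" "v2 \<in> {a,b}" using v1 v2 C1B AB by blast+
      then have "{v1,v2} = {hd A, last A}" using ab_set hA by auto
      then show ?thesis using pairs_not_ends[OF dA lA pA] by simp
    qed
  qed
qed


definition dir :: "(complex \<times> complex \<times> nat) set \<Rightarrow> complex \<times> complex \<Rightarrow> complex \<Rightarrow> complex \<Rightarrow> bool" where
  "dir D ori x y \<longleftrightarrow> (x,y) = ori \<or> (\<exists>s. (x,y,s) \<in> D)"

definition inv_ok :: "complex set set \<Rightarrow> complex \<Rightarrow> complex \<Rightarrow> (complex \<times> complex \<times> nat) set \<Rightarrow> bool" where
  "inv_ok F v1 v2 D \<longleftrightarrow> (\<forall>u t s. (u,t,s) \<in> D \<longrightarrow> {u,t} \<in> F \<and> t \<noteq> v1 \<and> t \<noteq> v2 \<and> {u,t} \<noteq> {v1,v2})"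

definition tri_ok :: "drawing \<Rightarrow> complex set set \<Rightarrow> complex \<Rightarrow> complex \<Rightarrow> (complex \<times> complex \<times> nat) set \<Rightarrow> bool" where
  "tri_ok gam F v1 v2 D \<longleftrightarrow> (\<forall>ori\<in>{(v1,v2),(v2,v1)}. \<forall>a b c. is_triangle F a b c \<and> dir D ori a b \<and> dir D ori b c \<and> dir D ori c a
     \<longrightarrow> \<not> clockwise gam [a,b,c])"

lemma nt_pg: "near_triangulation gam W F \<Longrightarrow> plane_graph gam W F"
  unfolding near_triangulation_def by (elim conjE)

lemma orient_at_mem: "(x,y,s) \<in> orient_at F cs v3 \<longleftrightarrow>
   (y = v3 \<and> s = 1 \<and> {x,v3} \<in> F \<and> (succ_on cs x v3 \<or> succ_on cs v3 x)) \<or>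
   (x = v3 \<and> s = 2 \<and> {y,v3} \<in> F \<and> \<not> (succ_on cs y v3 \<or> succ_on cs v3 y))"
  unfolding orient_at_def by auto

lemma dist3:
  assumes cyc: "is_cycle F cs" and s12: "succ_on cs v1 v2" and s23: "succ_on cs v2 v3"
  shows "v1 \<noteq> v2" "v2 \<noteq> v3" "v1 \<noteq> v3"
proof -
  define n where "n = length cs"
  have d: "distinct cs" and n3: "3 \<le> n" using cyc unfolding is_cycle_def n_def by auto
  obtain i where i: "i < n" "cs ! i = v1" using s12 unfolding succ_on_def n_def by auto
  have v2: "v2 = cs ! (Suc i mod n)" using succ_idx[OF d, of i v2] i s12 unfolding n_def by simp
  note I3 = idx3[OF i(1) n3]
  have v3: "v3 = cs ! (Suc (Suc i) mod n)"
    using succ_idx[OF d, of "Suc i mod n" v3] s23 v2 I3 unfolding n_def by simp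
  have ln: "length cs = n" unfolding n_def ..
  show "v1 \<noteq> v2" "v2 \<noteq> v3" "v1 \<noteq> v3"
    using nth_eq_iff_index_eq[OF d] I3 i v2 v3 unfolding ln by metis+
qed

lemma orient_inv:
  assumes pg: "plane_graph gam W F" and cyc: "is_cycle F cs" and s12: "succ_on cs v1 v2" and s23: "succ_on cs v2 v3"
    and nc: "\<not> has_chord F cs"
  shows "inv_ok F v1 v2 (orient_at F cs v3)"
  unfolding inv_ok_def
proof (intro allI impI)
  fix u t s assume m: "(u,t,s) \<in> orient_at F cs v3"
  note D3 = dist3[OF cyc s12 s23]
  show "{u,t} \<in> F \<and> t \<noteq> v1 \<and> t \<noteq> v2 \<and> {u,t} \<noteq> {v1,v2}"
    using m unfolding orient_at_mem
  proof
    assume A: "t = v3 \<and> s = 1 \<and> {u,v3} \<in> F \<and> (succ_on cs u v3 \<or> succ_on cs v3 u)"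
    have "{u,t} \<noteq> {v1,v2}" using A D3 by (auto simp: doubleton_eq_iff)
    then show ?thesis using A D3 by auto
  next
    assume A: "u = v3 \<and> s = 2 \<and> {t,v3} \<in> F \<and> \<not> (succ_on cs t v3 \<or> succ_on cs v3 t)"
    have tF: "{u,t} \<in> F" using A by (simp add: insert_commute)
    have "t \<noteq> v2" using A s23 by blast
    moreover have "t \<noteq> v1"
    proof
      assume "t = v1"
      then have "{v1,v3} \<in> F" using A by simp
      then have "succ_on cs v3 v1" using CH[OF cyc s12 s23 _ nc] by simp
      then show False using A \<open>t = v1\<close> by blast
    qed
    moreover have "{u,t} \<noteq> {v1,v2}" using A D3 by (auto simp: doubleton_eq_iff)
    ultimately show ?thesis using tF by simp
  qed
qed

lemma cw_rot2:
  assumes pg: "plane_graph gam W F" and t: "is_triangle F a b c" and cw: "clockwise gam [a,b,c]"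
  shows "clockwise gam [c,a,b]"
proof -
  have "clockwise gam [b,c,a]" by (rule cw_rot[OF pg t cw])
  then show ?thesis using cw_rot[OF pg tri_rot[OF t]] by simp
qed

lemma tri_wlog:
  assumes pg: "plane_graph gam W F" and t: "is_triangle F a b c"
    and da: "dir D ori a b" "dir D ori b c" "dir D ori c a"
    and core: "\<And>a b c. is_triangle F a b c \<Longrightarrow> dir D ori a b \<Longrightarrow> dir D ori b c \<Longrightarrow> dir D ori c a \<Longrightarrow> P a \<Longrightarrow>
       \<not> clockwise gam [a,b,c]"
    and Pv: "P a \<or> P b \<or> P c"
  shows "\<not> clockwise gam [a,b,c]"
proof
  assume cw: "clockwise gam [a,b,c]"
  have t2: "is_triangle F b c a" and t3: "is_triangle F c a b" using t tri_rot by blast+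
  from Pv show False
  proof (elim disjE)
    assume "P a" then show False using core[OF t da] cw by blast
  next
    assume "P b" then show False using core[OF t2 da(2,3,1)] cw_rot[OF pg t cw] by blast
  next
    assume "P c" then show False using core[OF t3 da(3,1,2)] cw_rot2[OF pg t cw] by blast
  qed
qed


lemma main_run:
  "run gam W F v1 v2 D \<Longrightarrow> inv_ok F v1 v2 D \<and> tri_ok gam F v1 v2 D"
proof (induction rule: run.induct)
  case (orient_last W F cs v1 v2 v3)
  have pg: "plane_graph gam W F" using orient_last.hyps(1) by (rule nt_pg)
  have cyc: "is_cycle F cs" using oc_parts[OF orient_last.hyps(2)] by simp
  have s12: "succ_on cs v1 v2" and s23: "succ_on cs v2 v3" and nc: "\<not> has_chord F cs"
    and Wv: "W - {v3} = {v1, v2}" using orient_last.hyps by simp_all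
  note D3 = dist3[OF cyc s12 s23]
  have inv: "inv_ok F v1 v2 (orient_at F cs v3)" by (rule orient_inv[OF pg cyc s12 s23 nc])
  have noout: "\<not> dir (orient_at F cs v3) ori v3 y" if ori: "ori \<in> {(v1,v2),(v2,v1)}" for ori y
  proof
    assume d: "dir (orient_at F cs v3) ori v3 y"
    have "(v3, y) \<noteq> ori" using ori D3 by auto
    then obtain s where "(v3,y,s) \<in> orient_at F cs v3" using d unfolding dir_def by blast
    then have "(y = v3 \<and> {v3,v3} \<in> F) \<or> ({y,v3} \<in> F \<and> \<not> (succ_on cs y v3 \<or> succ_on cs v3 y))"
      unfolding orient_at_mem by auto
    then show False
    proof
      assume "y = v3 \<and> {v3,v3} \<in> F"
      then show False using pg_edge_in2[OF pg, of v3 v3] by simp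
    next
      assume A: "{y,v3} \<in> F \<and> \<not> (succ_on cs y v3 \<or> succ_on cs v3 y)"
      have "y \<in> W" "y \<noteq> v3" using pg_edge_in2[OF pg] A by blast+
      then have "y = v1 \<or> y = v2" using Wv by blast
      then show False
      proof
        assume "y = v1"
        then have "succ_on cs v3 v1" using CH[OF cyc s12 s23 _ nc] A by simp
        then show False using A \<open>y = v1\<close> by blast
      next
        assume "y = v2" then show False using A s23 by blast
      qed
    qed
  qed
  have tri: "tri_ok gam F v1 v2 (orient_at F cs v3)"
    unfolding tri_ok_def
  proof (intro ballI allI impI)
    fix ori a b c assume ori: "ori \<in> {(v1,v2),(v2,v1)}"
      and H: "is_triangle F a b c \<and> dir (orient_at F cs v3) ori a b \<and> dir (orient_at F cs v3) ori b c \<and> dir (orient_at F cs v3) ori c a"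
    have t: "distinct [a,b,c]" "{a,b} \<in> F" "{b,c} \<in> F" "{c,a} \<in> F" using H unfolding is_triangle_def by auto
    have "a \<in> W" "b \<in> W" "c \<in> W" using pg_edge_in2[OF pg t(2)] pg_edge_in2[OF pg t(3)] by auto
    have "v3 = a \<or> v3 = b \<or> v3 = c"
    proof (rule ccontr)
      assume "\<not> (v3 = a \<or> v3 = b \<or> v3 = c)"
      then have "a \<in> {v1,v2}" "b \<in> {v1,v2}" "c \<in> {v1,v2}" using Wv \<open>a \<in> W\<close> \<open>b \<in> W\<close> \<open>c \<in> W\<close> by blast+
      then show False using t(1) by auto
    qed
    moreover have "dir (orient_at F cs v3) ori a b" "dir (orient_at F cs v3) ori b c" "dir (orient_at F cs v3) ori c a"
      using H by simp_all
    ultimately have False using noout[OF ori] by metis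
    then show "\<not> clockwise gam [a,b,c]" ..
  qed
  show ?case using inv tri by simp
next
  case (orient_rec W F cs v1 v2 v3 D')
  have pg: "plane_graph gam W F" using orient_rec.hyps(1) by (rule nt_pg)
  have oc: "outer_cycle gam W F cs" using orient_rec.hyps(2) .
  have cyc: "is_cycle F cs" using oc_parts[OF oc] by simp
  have d: "distinct cs" using cyc unfolding is_cycle_def by simp
  have s12: "succ_on cs v1 v2" and s23: "succ_on cs v2 v3" and nc: "\<not> has_chord F cs"
    using orient_rec.hyps by simp_all
  note D3 = dist3[OF cyc s12 s23]
  define F' where "F' = {e \<in> F. v3 \<notin> e}"
  have IH: "inv_ok F' v1 v2 D' \<and> tri_ok gam F' v1 v2 D'" using orient_rec.IH unfolding F'_def .
  have inv': "\<And>u t s. (u,t,s) \<in> D' \<Longrightarrow> {u,t} \<in> F' \<and> t \<noteq> v1 \<and> t \<noteq> v2 \<and> {u,t} \<noteq> {v1,v2}"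
    using IH unfolding inv_ok_def by blast
  have tri': "tri_ok gam F' v1 v2 D'" using IH by simp
  define D where "D = orient_at F cs v3 \<union> D'"
  have inv0: "inv_ok F v1 v2 (orient_at F cs v3)" by (rule orient_inv[OF pg cyc s12 s23 nc])
  have inv: "inv_ok F v1 v2 D"
    unfolding inv_ok_def D_def
  proof (intro allI impI)
    fix u t s assume "(u,t,s) \<in> orient_at F cs v3 \<union> D'"
    then show "{u,t} \<in> F \<and> t \<noteq> v1 \<and> t \<noteq> v2 \<and> {u,t} \<noteq> {v1,v2}"
    proof
      assume "(u,t,s) \<in> orient_at F cs v3" then show ?thesis using inv0 unfolding inv_ok_def by blast
    next
      assume "(u,t,s) \<in> D'" then show ?thesis using inv'[of u t s] unfolding F'_def by blast
    qed
  qed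
  have notD': "(x,y,s) \<notin> D'" if "x = v3 \<or> y = v3" for x y s
  proof
    assume "(x,y,s) \<in> D'"
    then have "{x,y} \<in> F'" using inv' by blast
    then show False using that unfolding F'_def by auto
  qed
  have tri: "tri_ok gam F v1 v2 D"
    unfolding tri_ok_def
  proof (intro ballI allI impI)
    fix ori a b c assume ori: "ori \<in> {(v1,v2),(v2,v1)}"
      and H: "is_triangle F a b c \<and> dir D ori a b \<and> dir D ori b c \<and> dir D ori c a"
    have orin: "fst ori \<noteq> v3" "snd ori \<noteq> v3" "fst ori \<in> {v1,v2}" "snd ori \<in> {v1,v2}" using ori D3 by auto
    show "\<not> clockwise gam [a,b,c]"
    proof (cases "v3 = a \<or> v3 = b \<or> v3 = c")
      case False
      have dd: "dir D' ori x y" if dxy: "dir D ori x y" and xy3: "x \<noteq> v3" "y \<noteq> v3" for x y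
      proof -
        have "\<forall>s. (x,y,s) \<notin> orient_at F cs v3" using xy3 orient_at_mem by blast
        then show ?thesis using dxy unfolding dir_def D_def by blast
      qed
      have "is_triangle F' a b c" using H False unfolding is_triangle_def F'_def by auto
      moreover have "dir D' ori a b" "dir D' ori b c" "dir D' ori c a" using H False dd by auto
      ultimately show ?thesis using tri' ori unfolding tri_ok_def by blast
    next
      case True
      show ?thesis
      proof (rule tri_wlog[OF pg, where P = "\<lambda>z. z = v3" and D = D and ori = ori])
        show "is_triangle F a b c" "dir D ori a b" "dir D ori b c" "dir D ori c a" using H by simp_all
        show "a = v3 \<or> b = v3 \<or> c = v3" using True by auto
      next
        fix a' b c assume t: "is_triangle F a' b c" and d1: "dir D ori a' b" and d2: "dir D ori b c"
          and d3: "dir D ori c a'" and av: "a' = v3"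
        have tt: "distinct [v3,b,c]" "{v3,b} \<in> F" "{b,c} \<in> F" "{c,v3} \<in> F" using t av unfolding is_triangle_def by auto
        have "(v3,b) \<noteq> ori" using orin by auto
        then obtain s where "(v3,b,s) \<in> D" using d1 av unfolding dir_def by blast
        then have "(v3,b,s) \<in> orient_at F cs v3" using notD' unfolding D_def by blast
        then have nb: "\<not> (succ_on cs b v3 \<or> succ_on cs v3 b)" using tt(1) unfolding orient_at_mem by auto
        have bv1: "b \<noteq> v1"
        proof
          assume "b = v1"
          then have "{v1,v3} \<in> F" using tt by (simp add: insert_commute)
          then have "succ_on cs v3 v1" using CH[OF cyc s12 s23 _ nc] by simp
          then show False using nb \<open>b = v1\<close> by blast
        qed
        have "(c,v3) \<noteq> ori" using orin by auto
        then obtain s' where "(c,v3,s') \<in> D" using d3 av unfolding dir_def by blast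
        then have "(c,v3,s') \<in> orient_at F cs v3" using notD' unfolding D_def by blast
        then have nc3: "succ_on cs c v3 \<or> succ_on cs v3 c" using tt(1) unfolding orient_at_mem by auto
        then show "\<not> clockwise gam [a',b,c]"
        proof
          assume sc: "succ_on cs c v3"
          obtain i where i: "i < length cs" "cs ! i = v2" "cs ! (Suc i mod length cs) = v3"
            using s23 unfolding succ_on_def by auto
          have "c = v2" using pred_idx[OF d i(1), of c] sc i by simp
          then have "dir D ori b v2" using d2 by simp
          moreover have "(b,v2) \<noteq> ori" using ori bv1 D3 by auto
          ultimately obtain s'' where "(b,v2,s'') \<in> D" unfolding dir_def by blast
          moreover have "(b,v2,s'') \<notin> orient_at F cs v3" using tt(1) D3 unfolding orient_at_mem by auto
          ultimately have "(b,v2,s'') \<in> D'" unfolding D_def by blast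
          then show ?thesis using inv' by blast
        next
          assume sc: "succ_on cs v3 c"
          have bc: "b \<noteq> v3" "b \<noteq> c" using tt(1) by auto
          have "\<not> clockwise gam [c,v3,b]" using GEO[OF pg oc sc tt(2) tt(3) bc] .
          moreover have tv: "is_triangle F v3 b c" using t av by simp
          ultimately show ?thesis using cw_rot2[OF pg tv] av by blast
        qed
      qed
    qed
  qed
  show ?case using inv tri unfolding D_def by simp
next
  case (chord W F cs v1 v2 k a p b q C1 C2 D1 x y D2)
  have pg: "plane_graph gam W F" using chord.hyps(1) by (rule nt_pg)
  have oc: "outer_cycle gam W F cs" using chord.hyps(2) .
  note K = CHORD[OF pg oc chord.hyps(4) chord.hyps(5) chord.hyps(6) chord.hyps(7) chord.hyps(3) chord.hyps(8) chord.hyps(9) chord.hyps(10)]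
  have xy: "{x,y} = {a,b}" using chord.hyps by simp
  define F1 where "F1 = disk_E gam F C1"
  define F2 where "F2 = disk_E gam F C2"
  define V1 where "V1 = W \<inter> closed_disk gam C1"
  define V2 where "V2 = W \<inter> closed_disk gam C2"
  have V12: "V1 \<inter> V2 \<subseteq> {a,b}" using K(1) unfolding V1_def V2_def by blast
  have IH1: "inv_ok F1 v1 v2 D1 \<and> tri_ok gam F1 v1 v2 D1" using chord.IH(1) unfolding F1_def .
  have IH2: "inv_ok F2 x y D2 \<and> tri_ok gam F2 x y D2" using chord.IH(2) unfolding F2_def .
  have inv1: "\<And>u t s. (u,t,s) \<in> D1 \<Longrightarrow> {u,t} \<in> F1 \<and> t \<noteq> v1 \<and> t \<noteq> v2 \<and> {u,t} \<noteq> {v1,v2}"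
    using IH1 unfolding inv_ok_def by blast
  have inv2: "\<And>u t s. (u,t,s) \<in> D2 \<Longrightarrow> {u,t} \<in> F2 \<and> t \<noteq> x \<and> t \<noteq> y \<and> {u,t} \<noteq> {x,y}"
    using IH2 unfolding inv_ok_def by blast
  have F1F: "F1 \<subseteq> F" and F2F: "F2 \<subseteq> F" unfolding F1_def F2_def by (rule diskE_sub)+
  have ends1: "u \<in> V1 \<and> t \<in> V1" if "{u,t} \<in> F1" for u t
    using diskE_ends[OF pg, of u t C1] that unfolding F1_def V1_def by blast
  have ends2: "u \<in> V2 \<and> t \<in> V2" if "{u,t} \<in> F2" for u t
    using diskE_ends[OF pg, of u t C2] that unfolding F2_def V2_def by blast
  have v12V: "v1 \<in> V1" "v2 \<in> V1" using K(3,4) unfolding V1_def by simp_all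
  have v12F1: "{v1,v2} \<in> F1" using K(5) unfolding F1_def .
  have abF2: "{a,b} \<in> F2" using K(2) unfolding F2_def .
  have pair_ab: "{u,t} = {a,b}" if "u \<in> V1" "t \<in> V1" "u \<in> V2" "t \<in> V2" "u \<noteq> t" for u t
    using that V12 by blast
  have D2sm: "(u,t,s) \<in> D2 \<Longrightarrow> {u,t} \<in> F2 \<and> u \<in> V2 \<and> t \<in> V2 \<and> {u,t} \<noteq> {a,b}" for u t s
    using inv2[of u t s] ends2[of u t] xy by simp
  have inv: "inv_ok F v1 v2 (D1 \<union> D2)"
    unfolding inv_ok_def
  proof (intro allI impI)
    fix u t s assume "(u,t,s) \<in> D1 \<union> D2"
    then show "{u,t} \<in> F \<and> t \<noteq> v1 \<and> t \<noteq> v2 \<and> {u,t} \<noteq> {v1,v2}"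
    proof
      assume "(u,t,s) \<in> D1" then show ?thesis using inv1[of u t s] F1F by blast
    next
      assume m: "(u,t,s) \<in> D2"
      have uF: "{u,t} \<in> F" using inv2[OF m] F2F by blast
      have uV: "u \<in> V2" "t \<in> V2" using ends2 inv2[OF m] by blast+
      have tx: "t \<noteq> x" "t \<noteq> y" using inv2[OF m] by simp_all
      have "t \<notin> {a,b}" using tx xy by blast
      then have "t \<noteq> v1" "t \<noteq> v2" using uV v12V V12 by blast+
      moreover have "{u,t} \<noteq> {v1,v2}"
      proof
        assume e: "{u,t} = {v1,v2}"
        then have "u \<in> V1" "t \<in> V1" using v12V by (auto simp: doubleton_eq_iff)
        moreover have "u \<noteq> t" using pg_edge_in2[OF pg uF] by simp
        ultimately have "{u,t} = {a,b}" using pair_ab uV by blast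
        then show False using inv2[OF m] xy by simp
      qed
      ultimately show ?thesis using uF by simp
    qed
  qed
  have tri: "tri_ok gam F v1 v2 (D1 \<union> D2)"
    unfolding tri_ok_def
  proof (intro ballI allI impI)
    fix ori a' b' c' assume ori: "ori \<in> {(v1,v2),(v2,v1)}"
      and H: "is_triangle F a' b' c' \<and> dir (D1 \<union> D2) ori a' b' \<and> dir (D1 \<union> D2) ori b' c' \<and> dir (D1 \<union> D2) ori c' a'"
    have L12: "dir D1 ori u t \<or> (\<exists>s. (u,t,s) \<in> D2)" if "dir (D1 \<union> D2) ori u t" for u t
      using that unfolding dir_def by blast
    have L1: "u \<in> V1 \<and> t \<in> V1 \<and> {u,t} \<in> F1" if dut: "dir D1 ori u t" for u t
    proof (cases "(u,t) = ori")
      case True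
      then have e: "{u,t} = {v1,v2}" using ori by auto
      then have "u \<in> {v1,v2}" "t \<in> {v1,v2}" by blast+
      moreover have "{u,t} \<in> F1" using e v12F1 by simp
      ultimately show ?thesis using v12V by blast
    next
      case False
      then obtain s where "(u,t,s) \<in> D1" using dut unfolding dir_def by blast
      then show ?thesis using inv1 ends1 by blast
    qed
    have L2: "u \<in> V2 \<and> t \<in> V2 \<and> {u,t} \<in> F2 \<and> {u,t} \<noteq> {a,b}" if "\<exists>s. (u,t,s) \<in> D2" for u t
      using that D2sm by blast
    have tF: "is_triangle F a' b' c'" using H by simp
    show "\<not> clockwise gam [a',b',c']"
    proof (cases "a' \<in> V1 \<and> b' \<in> V1 \<and> c' \<in> V1")
      case True
      have t: "distinct [a',b',c']" using tF unfolding is_triangle_def by simp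
      have only1: "dir D1 ori u t" if "dir (D1 \<union> D2) ori u t" "u \<in> V1" "t \<in> V1" "u \<noteq> t" for u t
      proof (rule ccontr)
        assume "\<not> dir D1 ori u t"
        then have "\<exists>s. (u,t,s) \<in> D2" using L12 that(1) by blast
        then have "u \<in> V2 \<and> t \<in> V2 \<and> {u,t} \<noteq> {a,b}" using L2 by blast
        then show False using pair_ab that by blast
      qed
      have d1: "dir D1 ori a' b'" "dir D1 ori b' c'" "dir D1 ori c' a'" using only1 H True t by auto
      have "is_triangle F1 a' b' c'" using t L1 d1 unfolding is_triangle_def by auto
      then show ?thesis using IH1 ori d1 unfolding tri_ok_def by blast
    next
      case False
      show ?thesis
      proof (rule tri_wlog[OF pg tF, where P = "\<lambda>z. z \<notin> V1" and D = "D1 \<union> D2" and ori = ori])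
        show "dir (D1 \<union> D2) ori a' b'" "dir (D1 \<union> D2) ori b' c'" "dir (D1 \<union> D2) ori c' a'" using H by simp_all
        show "a' \<notin> V1 \<or> b' \<notin> V1 \<or> c' \<notin> V1" using False by blast
      next
        fix r1 r2 r3 assume t: "is_triangle F r1 r2 r3" and d1: "dir (D1 \<union> D2) ori r1 r2"
          and d2: "dir (D1 \<union> D2) ori r2 r3" and d3: "dir (D1 \<union> D2) ori r3 r1" and r1V: "r1 \<notin> V1"
        have tt: "distinct [r1,r2,r3]" using t unfolding is_triangle_def by simp
        have e12: "\<exists>s. (r1,r2,s) \<in> D2" using L12[OF d1] L1 r1V by blast
        have e31: "\<exists>s. (r3,r1,s) \<in> D2" using L12[OF d3] L1 r1V by blast
        have A: "r1 \<in> V2" "r2 \<in> V2" "r3 \<in> V2" "{r1,r2} \<in> F2" "{r3,r1} \<in> F2"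
          using L2[OF e12] L2[OF e31] by auto
        show "\<not> clockwise gam [r1,r2,r3]"
        proof (cases "\<exists>s. (r2,r3,s) \<in> D2")
          case True
          have "{r2,r3} \<in> F2" using L2[OF True] by blast
          then have "is_triangle F2 r1 r2 r3" using tt A unfolding is_triangle_def by auto
          moreover have "dir D2 (x,y) r1 r2" "dir D2 (x,y) r2 r3" "dir D2 (x,y) r3 r1"
            using e12 e31 True unfolding dir_def by auto
          ultimately show ?thesis using IH2 unfolding tri_ok_def by blast
        next
          case False
          then have "dir D1 ori r2 r3" using L12[OF d2] by blast
          then have "r2 \<in> V1" "r3 \<in> V1" using L1 by blast+
          then have e23: "{r2,r3} = {a,b}" using pair_ab A tt by auto
          then have ori2: "(r2,r3) \<in> {(x,y),(y,x)}" using xy tt by (auto simp: doubleton_eq_iff)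
          have "is_triangle F2 r1 r2 r3" using tt A e23 abF2 unfolding is_triangle_def by auto
          moreover have "dir D2 (r2,r3) r1 r2" "dir D2 (r2,r3) r2 r3" "dir D2 (r2,r3) r3 r1"
            using e12 e31 unfolding dir_def by auto
          ultimately show ?thesis using IH2 ori2 unfolding tri_ok_def by blast
        qed
      qed
    qed
  qed
  show ?case using inv tri by simp
qed

theorem proposition4p2:
  fixes gam :: drawing and V :: "complex set" and E :: "complex set set"
    and cs :: "complex list" and v1 v2 :: complex
    and D :: "(complex \<times> complex \<times> nat) set" and o12 :: "complex \<times> complex"
  assumes "triangular_graph gam V E"
    and "outer_cycle gam V E cs"
    and "succ_on cs v1 v2"
    and "o12 \<in> {(v1, v2), (v2, v1)}"
    and "run gam V E v1 v2 D"
  shows "\<not> (\<exists>a b c. is_triangle E a b c \<and>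
            (\<forall>(x, y) \<in> {(a, b), (b, c), (c, a)}.
               (x, y) = o12 \<or> (\<exists>s. (x, y, s) \<in> D)) \<and>
            clockwise gam [a, b, c])"
proof
  assume "\<exists>a b c. is_triangle E a b c \<and>
            (\<forall>(x, y) \<in> {(a, b), (b, c), (c, a)}.
               (x, y) = o12 \<or> (\<exists>s. (x, y, s) \<in> D)) \<and>
            clockwise gam [a, b, c]"
  then obtain a b c where t: "is_triangle E a b c" and dd: "\<forall>(x, y) \<in> {(a, b), (b, c), (c, a)}.
               (x, y) = o12 \<or> (\<exists>s. (x, y, s) \<in> D)" and cw: "clockwise gam [a, b, c]" by blast
  have "dir D o12 a b" "dir D o12 b c" "dir D o12 c a" using dd unfolding dir_def by auto
  moreover have "tri_ok gam E v1 v2 D" using main_run[OF assms(5)] by simp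
  ultimately show False using t cw assms(4) unfolding tri_ok_def by blast
qed

end
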